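(* Under the hypotheses of Theorem 5.2 ($f$ convex, differentiable, symmetric, $M$-smooth and $m$-strongly convex, $m>0$, $\kappa=M/m$, $X^\star$ the minimizer of $f$ over $\mathbb{S}^n_+$, $X^0=\frac{1}{\|\nabla f(0)-\nabla f(e_1e_1^\top)\|_F}\mathcal{P}_+(-\nabla f(0))$, $U^0\in\mathbb{R}^{n\times r}$ with $U^0(U^0)^\top=X^0_r$), suppose additionally that $\mathrm{rank}(X^\star)=r$, and let $U^\star_r\in\mathbb{R}^{n\times r}$ with $X^\star=U^\star_r(U^\star_r)^\top$. Then $$\mathrm{Dist}(U^0,U^\star_r)\le 4\sqrt{2}\,r\,\tau(X^\star)\sqrt{\kappa^2-\tfrac{2}{\kappa}+1}\;\sigma_r(U^\star_r).$$
   Context: $\mathbb{S}^n_+$ is the cone of $n\times n$ positive semidefinite matrices; $\mathcal{P}_+(Y)$ is the projection of a symmetric matrix $Y$ onto $\mathbb{S}^n_+$ (keep only positive eigenvalues in the eigendecomposition). $e_1$ is the first standard basis vector. $X^0_r$ is the best rank-$r$ approximation of $X^0$ (truncated eigendecomposition). For a matrix $A$, $\sigma_i(A)$ is its $i$-th largest singular value, $\|A\|_2=\sigma_1(A)$, $\|A\|_F$ the Frobenius norm. For a rank-$r$ PSD matrix $Z$, $\tau(Z)=\sigma_1(Z)/\sigma_r(Z)$. For $U,V\in\mathbb{R}^{n\times r}$, $\mathrm{Dist}(U,V)=\min_{R\in\mathcal{O}_r}\|U-VR\|_F$, $\mathcal{O}_r$ the $r\times r$ orthogonal matrices. $M$-smooth: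 $\|\nabla f(X)-\nabla f(Y)\|_F\le M\|X-Y\|_F$ for all $X,Y\in\mathbb{S}^n_+$. $m$-strongly convex: $f(Y)\ge f(X)+\langle\nabla f(X),Y-X\rangle+\frac m2\|Y-X\|_F^2$ for all $X,Y\in\mathbb{S}^n_+$. *)

theory Defs
  imports "HOL-Analysis.Analysis"
begin

text \<open>Matrices are real^'c^'r (rows indexed by 'r, columns by 'c).
 On real^'n^'m, norm is the Frobenius norm and the inner product is the
 Frobenius inner product (sum of entrywise products).\<close>

definition psd :: "real^'n^'n \<Rightarrow> bool" where
  "psd A \<longleftrightarrow> transpose A = A \<and> (\<forall>x. 0 \<le> x \<bullet> (A *v x))"

definition psd_cone :: "(real^'n^'n) set" where
  "psd_cone = {A. psd A}"

definition proj_psd :: "real^'n^'n \<Rightarrow> real^'n^'n" where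
  "proj_psd Y = closest_point psd_cone Y"

definition outer :: "real^'r \<Rightarrow> real^'c \<Rightarrow> real^'c^'r" where
  "outer u v = (\<chi> i j. u $ i * v $ j)"

definition is_svd :: "real^'c^'r \<Rightarrow> (nat \<Rightarrow> real) \<Rightarrow> bool" where
  "is_svd A s \<longleftrightarrow>
     (let p = min CARD('r) CARD('c) in
       (\<forall>k\<in>{1..p}. 0 \<le> s k) \<and>
       (\<forall>k j. 1 \<le> k \<longrightarrow> k \<le> j \<longrightarrow> j \<le> p \<longrightarrow> s j \<le> s k) \<and>
       (\<exists>(u::nat \<Rightarrow> real^'r) (v::nat \<Rightarrow> real^'c).
          (\<forall>k\<in>{1..p}. \<forall>j\<in>{1..p}.
             u k \<bullet> u j = (if k = j then 1 else 0) \<and> v k \<bullet> v j = (if k = j then 1 else 0)) \<and>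
          A = (\<Sum>k=1..p. s k *\<^sub>R outer (u k) (v k))))"

text \<open>sigma_k(A), the k-th largest singular value (1-based)\<close>
definition sing_val :: "real^'c^'r \<Rightarrow> nat \<Rightarrow> real" where
  "sing_val A k = (SOME s. is_svd A s) k"

definition tau :: "real^'n^'n \<Rightarrow> real" where
  "tau Z = sing_val Z 1 / sing_val Z (rank Z)"

definition Dist :: "real^'r^'n \<Rightarrow> real^'r^'n \<Rightarrow> real" where
  "Dist U V = Inf ((\<lambda>R. norm (U - V ** R)) ` {R. orthogonal_matrix R})"

definition trunc_eig :: "real^'n^'n \<Rightarrow> nat \<Rightarrow> real^'n^'n \<Rightarrow> bool" where
  "trunc_eig X r Z \<longleftrightarrow>
     (\<exists>(lam::'n \<Rightarrow> real) (q::'n \<Rightarrow> real^'n) (S::'n set).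
        (\<forall>i j. q i \<bullet> q j = (if i = j then 1 else 0)) \<and>
        X = (\<Sum>i\<in>UNIV. lam i *\<^sub>R outer (q i) (q i)) \<and>
        card S = r \<and> (\<forall>i\<in>S. \<forall>j. j \<notin> S \<longrightarrow> lam j \<le> lam i) \<and>
        Z = (\<Sum>i\<in>S. lam i *\<^sub>R outer (q i) (q i)))"

end

theory Submission
  imports Defs
begin

lemma inner_mat_trace:
  fixes A B :: "real^'c^'r"
  shows "inner A B = trace (transpose A ** B)"
proof -
  have "inner A B = (\<Sum>i\<in>UNIV. \<Sum>j\<in>UNIV. A$i$j * B$i$j)"
    by (simp add: inner_vec_def inner_real_def)
  also have "\<dots> = (\<Sum>j\<in>UNIV. \<Sum>i\<in>UNIV. A$i$j * B$i$j)"
    by (rule sum.swap)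
  also have "\<dots> = trace (transpose A ** B)"
    by (simp add: trace_def matrix_matrix_mult_def transpose_def)
  finally show ?thesis .
qed

lemma sym_inner:
  fixes A :: "real^'n^'m"
  shows "x \<bullet> (A *v y) = (transpose A *v x) \<bullet> y"
proof -
  have "x v* A = transpose A *v x" using vector_transpose_matrix[of x "transpose A"] by simp
  then show ?thesis by (simp add: dot_lmul_matrix[symmetric])
qed

lemma outer_mulv: "outer a b *v x = (b \<bullet> x) *\<^sub>R a"
  by (simp add: outer_def matrix_vector_mult_def vec_eq_iff inner_vec_def sum_distrib_left
      mult_ac inner_real_def)

lemma inner_outer: "inner (outer a b) (outer c d) = (a \<bullet> c) * (b \<bullet> d)"
proof -
  have "inner (outer a b) (outer c d) = (\<Sum>i\<in>UNIV. \<Sum>j\<in>UNIV. (a$i * c$i) * (b$j * d$j))"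
    by (simp add: outer_def inner_vec_def inner_real_def mult_ac)
  also have "\<dots> = (a \<bullet> c) * (b \<bullet> d)"
    by (simp add: sum_product inner_vec_def inner_real_def)
  finally show ?thesis .
qed

lemma transpose_outer: "transpose (outer a b) = outer b a"
  by (simp add: outer_def transpose_def vec_eq_iff)


definition orthon :: "'i set \<Rightarrow> ('i \<Rightarrow> 'a::real_inner) \<Rightarrow> bool" where
  "orthon I v \<longleftrightarrow> (\<forall>i\<in>I. \<forall>j\<in>I. v i \<bullet> v j = (if i = j then 1 else 0))"

lemma inner_sum_orthon:
  assumes "finite I" "orthon I v"
  shows "(\<Sum>i\<in>I. c i *\<^sub>R v i) \<bullet> (\<Sum>j\<in>I. d j *\<^sub>R v j) = (\<Sum>i\<in>I. c i * d i)"
proof -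
  have "(\<Sum>i\<in>I. c i *\<^sub>R v i) \<bullet> (\<Sum>j\<in>I. d j *\<^sub>R v j)
      = (\<Sum>i\<in>I. \<Sum>j\<in>I. c i * d j * (v i \<bullet> v j))"
    unfolding inner_sum_left inner_sum_right by (simp add: sum_distrib_left mult_ac, rule sum.swap)
  also have "\<dots> = (\<Sum>i\<in>I. \<Sum>j\<in>I. if j = i then c i * d i else 0)"
    using assms(2) unfolding orthon_def
    by (intro sum.cong refl) auto
  also have "\<dots> = (\<Sum>i\<in>I. c i * d i)"
    using assms(1) by simp
  finally show ?thesis .
qed

lemma inner_sum_orthon_vec:
  assumes "finite I" "orthon I v" "j \<in> I"
  shows "v j \<bullet> (\<Sum>i\<in>I. c i *\<^sub>R v i) = c j"
proof -
  have "v j \<bullet> (\<Sum>i\<in>I. c i *\<^sub>R v i) = (\<Sum>i\<in>I. if i = j then c j else 0)"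
    unfolding inner_sum_right using assms(2,3) unfolding orthon_def
    by (intro sum.cong refl) (auto simp: inner_commute)
  then show ?thesis using assms by simp
qed

lemma bessel:
  assumes "finite I" "orthon I v"
  shows "(\<Sum>i\<in>I. (v i \<bullet> x)^2) \<le> x \<bullet> x"
proof -
  define p where "p = (\<Sum>i\<in>I. (v i \<bullet> x) *\<^sub>R v i)"
  have pp: "p \<bullet> p = (\<Sum>i\<in>I. (v i \<bullet> x)^2)"
    unfolding p_def by (simp add: inner_sum_orthon[OF assms] power2_eq_square)
  have xp: "x \<bullet> p = (\<Sum>i\<in>I. (v i \<bullet> x)^2)"
    unfolding p_def by (simp add: inner_sum_right power2_eq_square inner_commute)
  have "0 \<le> (x - p) \<bullet> (x - p)" by simp
  also have "\<dots> = x \<bullet> x - 2 * (x \<bullet> p) + p \<bullet> p"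
    by (simp add: inner_diff inner_commute)
  finally show ?thesis using pp xp by simp
qed

lemma parseval_expand:
  fixes v :: "'i \<Rightarrow> real^'a"
  assumes "finite I" "orthon I v" "card I = CARD('a)"
  shows "x = (\<Sum>i\<in>I. (v i \<bullet> x) *\<^sub>R v i)"
proof -
  have inj: "inj_on v I"
    using assms(2) unfolding orthon_def inj_on_def
    by (metis one_neq_zero)
  have ind: "independent (v ` I)"
  proof (rule pairwise_orthogonal_independent)
    show "pairwise orthogonal (v ` I)"
      using assms(2) unfolding orthon_def pairwise_def orthogonal_def by auto
    show "0 \<notin> v ` I"
      using assms(2) unfolding orthon_def by (metis imageE inner_zero_left zero_neq_one)
  qed
  have cardv: "card (v ` I) = dim (UNIV :: (real^'a) set)"
    using card_image[OF inj] assms(3) by simp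
  have sp: "UNIV \<subseteq> span (v ` I)"
    using card_eq_dim[of "v ` I" UNIV] cardv ind assms(1) by auto
  define y where "y = x - (\<Sum>i\<in>I. (v i \<bullet> x) *\<^sub>R v i)"
  have orth: "orthogonal y z" if zI: "z \<in> v ` I" for z
  proof -
    obtain j where j: "j \<in> I" "z = v j" using zI by auto
    have "v j \<bullet> y = 0"
      unfolding y_def inner_diff_right inner_sum_orthon_vec[OF assms(1,2) j(1)] by simp
    then show ?thesis using j by (simp add: orthogonal_def inner_commute)
  qed
  have "orthogonal y y"
    by (rule orthogonal_to_span[of y "v ` I" y]) (use sp orth in auto)
  then have "y = 0" by (simp add: orthogonal_def)
  then show ?thesis unfolding y_def by simp
qed

lemma parseval:
  fixes v :: "'i \<Rightarrow> real^'a"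
  assumes "finite I" "orthon I v" "card I = CARD('a)"
  shows "(\<Sum>i\<in>I. (v i \<bullet> x)^2) = x \<bullet> x"
proof -
  have "x \<bullet> x = (\<Sum>i\<in>I. (v i \<bullet> x) *\<^sub>R v i) \<bullet> (\<Sum>i\<in>I. (v i \<bullet> x) *\<^sub>R v i)"
    using parseval_expand[OF assms] by simp
  also have "\<dots> = (\<Sum>i\<in>I. (v i \<bullet> x)^2)"
    by (simp add: inner_sum_orthon[OF assms(1,2)] power2_eq_square)
  finally show ?thesis by simp
qed

lemma mulv_sum: "(A::real^'n^'m) *v (\<Sum>k\<in>K. f k) = (\<Sum>k\<in>K. A *v f k)"
  by (induct K rule: infinite_finite_induct) (auto simp: matrix_vector_right_distrib)

lemma sum_mulv: "(\<Sum>k\<in>K. F k) *v (x::real^'n) = (\<Sum>k\<in>K. (F k :: real^'n^'m) *v x)"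
  by (induct K rule: infinite_finite_induct) (auto simp: matrix_vector_mult_add_rdistrib)

lemma scaleR_mulv: "(c *\<^sub>R (A::real^'n^'m)) *v x = c *\<^sub>R (A *v x)"
  by (simp add: matrix_vector_mult_def vec_eq_iff sum_distrib_left mult_ac)

lemma tp_lin_zero:
  fixes p q :: real
  assumes "\<And>t. t * p + t^2 * q \<le> 0"
  shows "p = 0"
proof (rule ccontr)
  assume p: "p \<noteq> 0"
  define s where "s = 1 / (\<bar>q\<bar> + 1)"
  have s0: "s > 0" unfolding s_def by simp
  have e: "(s*p) * p + (s*p)^2 * q = s * p^2 * (1 + s*q)"
    by (simp add: power2_eq_square algebra_simps)
  have "s * \<bar>q\<bar> < 1" unfolding s_def by (simp add: field_simps)
  moreover have "- (s * \<bar>q\<bar>) \<le> s * q"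
    using mult_left_mono[of "-\<bar>q\<bar>" q s] s0 by simp
  ultimately have "1 + s*q > 0" by linarith
  moreover have "s * p^2 > 0" using s0 p by simp
  ultimately have "(s*p) * p + (s*p)^2 * q > 0" unfolding e by simp
  then show False using assms[of "s*p"] by linarith
qed

lemma sym_mat_inner:
  fixes A :: "real^'n^'n"
  assumes "transpose A = A"
  shows "x \<bullet> (A *v y) = (A *v x) \<bullet> y"
  using sym_inner[of x A y] assms by simp

definition ev :: "real^'n^'n \<Rightarrow> real^'n \<Rightarrow> real" where
  "ev A x = x \<bullet> (A *v x)"

definition spinv :: "real^'n^'n \<Rightarrow> (real^'n) list \<Rightarrow> bool" where
  "spinv A L \<longleftrightarrow>
    (\<forall>i<length L. \<forall>j<length L. L!i \<bullet> L!j = (if i = j then 1 else 0)) \<and>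
    (\<forall>i<length L. A *v (L!i) = ev A (L!i) *\<^sub>R L!i) \<and>
    (\<forall>i j. i \<le> j \<longrightarrow> j < length L \<longrightarrow> ev A (L!j) \<le> ev A (L!i)) \<and>
    (L \<noteq> [] \<longrightarrow> (\<forall>y. norm y = 1 \<and> (\<forall>v\<in>set L. y \<bullet> v = 0) \<longrightarrow> ev A y \<le> ev A (last L)))"

lemma ev_expand:
  fixes A :: "real^'n^'n"
  assumes "transpose A = A"
  shows "ev A (x + t *\<^sub>R y) = ev A x + 2 * t * (x \<bullet> (A *v y)) + t^2 * ev A y"
proof -
  have "y \<bullet> (A *v x) = x \<bullet> (A *v y)"
    using sym_mat_inner[OF assms, of y x] by (simp add: inner_commute)
  then show ?thesis
    unfolding ev_def by (simp add: algebra_simps inner_add inner_commute power2_eq_square matrix_vector_mult_scaleR)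
qed

lemma ev_scale: "ev A (c *\<^sub>R x) = c^2 * ev A x"
  unfolding ev_def by (simp add: matrix_vector_mult_scaleR power2_eq_square)

lemma spinv_step:
  fixes A :: "real^'n^'n"
  assumes sym: "transpose A = A" and inv: "spinv A L" and len: "length L < CARD('n)"
  shows "\<exists>x. spinv A (L @ [x])"
proof -
  define S where "S = {y::real^'n. norm y = 1 \<and> (\<forall>v\<in>set L. y \<bullet> v = 0)}"
  have S_eq: "S = sphere 0 1 \<inter> (\<Inter>v\<in>set L. {y. y \<bullet> v = 0})"
    unfolding S_def by auto
  have hc: "closed {y::real^'n. y \<bullet> v = 0}" for v
  proof -
    have "{y::real^'n. y \<bullet> v = 0} = {y. v \<bullet> y = 0}" by (auto simp: inner_commute)
    then show ?thesis using closed_hyperplane[of v 0] by simp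
  qed
  have "closed (\<Inter>v\<in>set L. {y::real^'n. y \<bullet> v = 0})"
    by (intro closed_INT ballI hc)
  then have cS: "compact S" unfolding S_eq by (intro compact_Int_closed) auto
  have dimlt: "dim (set L) < DIM(real^'n)"
    using dim_le_card'[of "set L"] card_length[of L] len by simp
  then obtain z :: "real^'n" where z: "z \<noteq> 0" "\<And>y. y \<in> span (set L) \<Longrightarrow> orthogonal z y"
    using orthogonal_to_subspace_exists[OF dimlt] by blast
  have "(z /\<^sub>R norm z) \<in> S"
    unfolding S_def using z by (auto simp: orthogonal_def span_base)
  then have neS: "S \<noteq> {}" by auto
  have cont: "continuous_on S (ev A)"
    unfolding ev_def by (intro continuous_intros linear_continuous_on) (simp add: bounded_linear_def)
  obtain x where xS: "x \<in> S" and xmax: "\<And>y. y \<in> S \<Longrightarrow> ev A y \<le> ev A x"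
    using continuous_attains_sup[OF cS neS cont] by blast
  have nx: "norm x = 1" and xL: "\<And>v. v \<in> set L \<Longrightarrow> x \<bullet> v = 0" using xS S_def by auto
  have xx: "x \<bullet> x = 1" using nx by (simp add: norm_eq_1)
  define mu where "mu = ev A x"
  have key: "x \<bullet> (A *v y) = 0" if yL: "\<And>v. v \<in> set L \<Longrightarrow> y \<bullet> v = 0" and yx: "y \<bullet> x = 0" for y
  proof -
  have "2 * (x \<bullet> (A *v y)) = 0"
  proof (rule tp_lin_zero[of "2 * (x \<bullet> (A *v y))" "ev A y - mu * (y \<bullet> y)"])
    fix t :: real
    define z where "z = x + t *\<^sub>R y"
    have zz: "z \<bullet> z = 1 + t^2 * (y \<bullet> y)"
      unfolding z_def using xx yx by (simp add: inner_add inner_commute power2_eq_square algebra_simps)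
    then have zpos: "z \<bullet> z > 0" by (simp add: add_pos_nonneg)
    have nz: "norm z = sqrt (z \<bullet> z)" by (simp add: norm_eq_sqrt_inner)
    have z0: "z \<noteq> 0" using zpos by auto
    have zv: "z \<bullet> v = 0" if "v \<in> set L" for v
      using yL[OF that] xL[OF that] by (simp add: z_def inner_add_left)
    have "(z /\<^sub>R norm z) \<in> S"
      unfolding S_def using z0 zv by auto
    then have "ev A (z /\<^sub>R norm z) \<le> mu" using xmax mu_def by blast
    then have "ev A z / (z \<bullet> z) \<le> mu"
      using zpos by (simp add: ev_scale power_inverse power2_norm_eq_inner divide_inverse mult.commute)
    then have "ev A z \<le> mu * (z \<bullet> z)" using zpos by (simp add: divide_le_eq)
    then show "t * (2 * (x \<bullet> (A *v y))) + t^2 * (ev A y - mu * (y \<bullet> y)) \<le> 0"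
      unfolding z_def ev_expand[OF sym] using zz[unfolded z_def] mu_def xx yx inner_commute[of x y]
      by (simp add: algebra_simps power2_eq_square)
  qed
  then show ?thesis by simp
  qed
  define g where "g = A *v x - mu *\<^sub>R x"
  have gL: "g \<bullet> v = 0" if v: "v \<in> set L" for v
  proof -
    obtain i where i: "i < length L" "v = L!i" using v by (auto simp: in_set_conv_nth)
    have "v \<bullet> (A *v x) = (A *v v) \<bullet> x" by (rule sym_mat_inner[OF sym])
    also have "\<dots> = 0" using inv i xL[OF v] unfolding spinv_def by (simp add: inner_commute)
    finally show ?thesis unfolding g_def using xL[OF v] by (simp add: inner_diff_left inner_diff_right inner_commute)
  qed
  have gx: "g \<bullet> x = 0" unfolding g_def mu_def ev_def using xx by (simp add: inner_diff_left inner_diff_right inner_commute)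
  have "x \<bullet> (A *v g) = 0" by (rule key[OF gL gx])
  moreover have "x \<bullet> (A *v g) = g \<bullet> g"
  proof -
    have "x \<bullet> (A *v g) = (A *v x) \<bullet> g" by (rule sym_mat_inner[OF sym])
    also have "A *v x = g + mu *\<^sub>R x" unfolding g_def by simp
    finally show ?thesis using gx by (simp add: inner_add_left inner_add_right inner_commute)
  qed
  ultimately have "g = 0" by simp
  then have eig: "A *v x = ev A x *\<^sub>R x" unfolding g_def mu_def by simp
  show ?thesis
  proof (rule exI[of _ x], unfold spinv_def, intro conjI allI impI)
    fix i j assume i: "i < length (L @ [x])" and j: "j < length (L @ [x])"
    have xLi: "x \<bullet> L ! k = 0" "L ! k \<bullet> x = 0" if "k < length L" for k
      using xL[of "L!k"] that by (auto simp: inner_commute)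
    show "(L @ [x]) ! i \<bullet> (L @ [x]) ! j = (if i = j then 1 else 0)"
      using inv i j xx xLi unfolding spinv_def
      by (auto simp: nth_append less_Suc_eq)
  next
    fix i assume i: "i < length (L @ [x])"
    show "A *v (L @ [x]) ! i = ev A ((L @ [x]) ! i) *\<^sub>R (L @ [x]) ! i"
      using inv i eig unfolding spinv_def by (auto simp: nth_append less_Suc_eq)
  next
    fix i j assume ij: "i \<le> j" "j < length (L @ [x])"
    show "ev A ((L @ [x]) ! j) \<le> ev A ((L @ [x]) ! i)"
    proof (cases "j < length L")
      case True then show ?thesis using inv ij unfolding spinv_def by (simp add: nth_append)
    next
      case False
      then have jj: "j = length L" using ij by simp
      show ?thesis
      proof (cases "i = j")
        case True then show ?thesis by simp
      next
        case False
        then have iL: "i < length L" using ij jj by simp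
        then have Lne: "L \<noteq> []" by auto
        have "ev A x \<le> ev A (last L)" using inv Lne nx xL unfolding spinv_def by blast
        also have "last L = L ! (length L - 1)" using Lne by (simp add: last_conv_nth)
        also have "ev A \<dots> \<le> ev A (L ! i)" using inv iL unfolding spinv_def by auto
        finally show ?thesis using jj iL by (simp add: nth_append)
      qed
    qed
  next
    fix y assume "L @ [x] \<noteq> []"
    assume y: "norm y = 1 \<and> (\<forall>v\<in>set (L @ [x]). y \<bullet> v = 0)"
    then have "y \<in> S" unfolding S_def by auto
    then show "ev A y \<le> ev A (last (L @ [x]))" using xmax by simp
  qed
qed

lemma spinv_exists:
  fixes A :: "real^'n^'n"
  assumes sym: "transpose A = A"
  shows "k \<le> CARD('n) \<Longrightarrow> \<exists>L. length L = k \<and> spinv A L"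
proof (induct k)
  case 0
  show ?case by (rule exI[of _ "[]"]) (simp add: spinv_def)
next
  case (Suc k)
  then obtain L where L: "length L = k" "spinv A L" by auto
  then obtain x where "spinv A (L @ [x])" using spinv_step[OF sym L(2)] Suc by auto
  then show ?case using L by (intro exI[of _ "L @ [x]"]) simp
qed

lemma spectral_sorted:
  fixes A :: "real^'n^'n"
  assumes sym: "transpose A = A"
  obtains w :: "nat \<Rightarrow> real^'n" and mu :: "nat \<Rightarrow> real" where
    "orthon {1..CARD('n)} w"
    "\<And>k j. 1 \<le> k \<Longrightarrow> k \<le> j \<Longrightarrow> j \<le> CARD('n) \<Longrightarrow> mu j \<le> mu k"
    "\<And>k. k \<in> {1..CARD('n)} \<Longrightarrow> A *v w k = mu k *\<^sub>R w k"
    "A = (\<Sum>k=1..CARD('n). mu k *\<^sub>R outer (w k) (w k))"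
proof -
  obtain L where L: "length L = CARD('n)" "spinv A L"
    using spinv_exists[OF sym, of "CARD('n)"] by auto
  define w where "w k = L ! (k - 1)" for k
  define mu where "mu k = ev A (w k)" for k
  have on: "orthon {1..CARD('n)} w"
    using L unfolding orthon_def spinv_def w_def
    by (auto simp: diff_less_mono)
  have srt: "mu j \<le> mu k" if "1 \<le> k" "k \<le> j" "j \<le> CARD('n)" for k j
    using L that unfolding spinv_def mu_def w_def by (auto intro: diff_le_mono)
  have eig: "A *v w k = mu k *\<^sub>R w k" if "k \<in> {1..CARD('n)}" for k
    using L that unfolding spinv_def mu_def w_def by auto
  have dec: "A = (\<Sum>k=1..CARD('n). mu k *\<^sub>R outer (w k) (w k))"
  proof (rule matrix_eq[THEN iffD2], rule allI)
    fix x :: "real^'n"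
    have "A *v x = A *v (\<Sum>k=1..CARD('n). (w k \<bullet> x) *\<^sub>R w k)"
      using parseval_expand[OF _ on, of x] by simp
    also have "\<dots> = (\<Sum>k=1..CARD('n). (w k \<bullet> x) *\<^sub>R (mu k *\<^sub>R w k))"
      by (simp add: mulv_sum matrix_vector_mult_scaleR eig)
    also have "\<dots> = (\<Sum>k=1..CARD('n). mu k *\<^sub>R outer (w k) (w k)) *v x"
      by (simp add: sum_mulv scaleR_mulv outer_mulv mult.commute)
    finally show "A *v x = (\<Sum>k=1..CARD('n). mu k *\<^sub>R outer (w k) (w k)) *v x" .
  qed
  show ?thesis by (rule that[OF on srt eig dec])
qed

lemma orthon_inj: "orthon I v \<Longrightarrow> inj_on v I"
  unfolding orthon_def inj_on_def by (metis one_neq_zero)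

lemma orthon_indep:
  fixes v :: "'i \<Rightarrow> 'a::euclidean_space"
  assumes "orthon I v"
  shows "independent (v ` I)"
proof (rule pairwise_orthogonal_independent)
  show "pairwise orthogonal (v ` I)"
    using assms unfolding orthon_def pairwise_def orthogonal_def by auto
  show "0 \<notin> v ` I"
    using assms unfolding orthon_def by (metis imageE inner_zero_left zero_neq_one)
qed

lemma orthon_mono: "orthon I v \<Longrightarrow> J \<subseteq> I \<Longrightarrow> orthon J v"
  unfolding orthon_def by blast

lemma transpose_sum: "transpose (\<Sum>k\<in>K. F k) = (\<Sum>k\<in>K. transpose (F k :: real^'n^'m))"
  by (induct K rule: infinite_finite_induct) (auto simp: transpose_def vec_eq_iff)

lemma svd_data:
  fixes A :: "real^'c^'r"
  assumes "is_svd A s"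
  obtains u :: "nat \<Rightarrow> real^'r" and v :: "nat \<Rightarrow> real^'c" where
    "orthon {1..min CARD('r) CARD('c)} u" "orthon {1..min CARD('r) CARD('c)} v"
    "A = (\<Sum>k=1..min CARD('r) CARD('c). s k *\<^sub>R outer (u k) (v k))"
    "\<And>k. k \<in> {1..min CARD('r) CARD('c)} \<Longrightarrow> 0 \<le> s k"
    "\<And>k j. 1 \<le> k \<Longrightarrow> k \<le> j \<Longrightarrow> j \<le> min CARD('r) CARD('c) \<Longrightarrow> s j \<le> s k"
proof -
  let ?p = "min CARD('r) CARD('c)"
  from assms obtain u :: "nat \<Rightarrow> real^'r" and v :: "nat \<Rightarrow> real^'c" where
    a: "\<forall>k\<in>{1..?p}. 0 \<le> s k"
    "\<forall>k j. 1 \<le> k \<longrightarrow> k \<le> j \<longrightarrow> j \<le> ?p \<longrightarrow> s j \<le> s k"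
    "\<forall>k\<in>{1..?p}. \<forall>j\<in>{1..?p}. u k \<bullet> u j = (if k = j then 1 else 0) \<and> v k \<bullet> v j = (if k = j then 1 else 0)"
    "A = (\<Sum>k=1..?p. s k *\<^sub>R outer (u k) (v k))"
    unfolding is_svd_def Let_def by blast
  show ?thesis
    by (rule that[of u v]) (use a in \<open>auto simp: orthon_def\<close>)
qed

lemma svd_mulv:
  assumes "A = (\<Sum>k\<in>K. s k *\<^sub>R outer (u k) (v k))"
  shows "A *v x = (\<Sum>k\<in>K. (s k * (v k \<bullet> x)) *\<^sub>R u k)"
  unfolding assms by (simp add: sum_mulv scaleR_mulv outer_mulv)

lemma svd_tmulv:
  assumes "A = (\<Sum>k\<in>K. s k *\<^sub>R outer (u k) (v k))"
  shows "transpose A *v x = (\<Sum>k\<in>K. (s k * (u k \<bullet> x)) *\<^sub>R v k)"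
  unfolding assms by (simp add: transpose_sum transpose_scalar transpose_outer sum_mulv scaleR_mulv outer_mulv)

lemma svd_norm_mulv:
  assumes "A = (\<Sum>k\<in>K. s k *\<^sub>R outer (u k) (v k))" "finite K" "orthon K u"
  shows "(A *v x) \<bullet> (A *v x) = (\<Sum>k\<in>K. (s k)^2 * (v k \<bullet> x)^2)"
  unfolding svd_mulv[OF assms(1)] inner_sum_orthon[OF assms(2,3)]
  by (simp add: power2_eq_square mult_ac)

lemma svd_at_v:
  assumes "A = (\<Sum>k\<in>K. s k *\<^sub>R outer (u k) (v k))" "finite K" "orthon K v" "j \<in> K"
  shows "A *v v j = s j *\<^sub>R u j"
proof -
  have "A *v v j = (\<Sum>k\<in>K. (if k = j then s j *\<^sub>R u j else 0))"
    unfolding svd_mulv[OF assms(1)] using assms(3,4) unfolding orthon_def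
    by (intro sum.cong refl) auto
  then show ?thesis using assms(2,4) by simp
qed

lemma svd_at_u:
  assumes "A = (\<Sum>k\<in>K. s k *\<^sub>R outer (u k) (v k))" "finite K" "orthon K u" "j \<in> K"
  shows "transpose A *v u j = s j *\<^sub>R v j"
proof -
  have "transpose A *v u j = (\<Sum>k\<in>K. (if k = j then s j *\<^sub>R v j else 0))"
    unfolding svd_tmulv[OF assms(1)] using assms(3,4) unfolding orthon_def
    by (intro sum.cong refl) (auto simp: inner_commute)
  then show ?thesis using assms(2,4) by simp
qed

lemma svd_norm:
  assumes "A = (\<Sum>k\<in>K. s k *\<^sub>R outer (u k) (v k))" "finite K" "orthon K u" "orthon K v"
  shows "A \<bullet> A = (\<Sum>k\<in>K. (s k)^2)"
proof -
  have "A \<bullet> A = (\<Sum>k\<in>K. \<Sum>j\<in>K. s k * s j * ((u k \<bullet> u j) * (v k \<bullet> v j)))"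
    unfolding assms(1) inner_sum_left inner_sum_right by (simp add: inner_outer mult_ac, subst sum.swap, simp add: mult_ac)
  also have "\<dots> = (\<Sum>k\<in>K. \<Sum>j\<in>K. if j = k then (s k)^2 else 0)"
    using assms(3,4) unfolding orthon_def by (intro sum.cong refl) (auto simp: power2_eq_square)
  also have "\<dots> = (\<Sum>k\<in>K. (s k)^2)" using assms(2) by simp
  finally show ?thesis .
qed

lemma svd_rank_ge:
  fixes A :: "real^'c^'r"
  assumes "A = (\<Sum>k=1..p. s k *\<^sub>R outer (u k) (v k))" "orthon {1..p} u" "orthon {1..p} v"
    "j \<le> p" "\<And>k. k \<in> {1..j} \<Longrightarrow> s k \<noteq> 0"
  shows "j \<le> rank A"
proof -
  have sub: "u ` {1..j} \<subseteq> range (\<lambda>x. A *v x)"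
  proof
    fix y assume "y \<in> u ` {1..j}"
    then obtain k where k: "k \<in> {1..j}" "y = u k" by auto
    have kp: "k \<in> {1..p}" using k assms(4) by auto
    have sk: "s k \<noteq> 0" using assms(5)[OF k(1)] .
    have e0: "A *v v k = s k *\<^sub>R u k" by (rule svd_at_v[OF assms(1) _ assms(3) kp]) simp
    have "A *v (inverse (s k) *\<^sub>R v k) = inverse (s k) *\<^sub>R (A *v v k)"
      by (rule matrix_vector_mult_scaleR)
    also have "\<dots> = u k" using sk e0 by simp
    finally have e: "A *v (inverse (s k) *\<^sub>R v k) = u k" .
    show "y \<in> range (\<lambda>x. A *v x)"
      using rangeI[of "\<lambda>x. A *v x" "inverse (s k) *\<^sub>R v k"] e k(2) by simp
  qed
  have ind: "independent (u ` {1..j})"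
    using orthon_indep[OF orthon_mono[OF assms(2)]] assms(4) by auto
  have "card (u ` {1..j}) = j"
    using card_image[OF orthon_inj[OF orthon_mono[OF assms(2)]]] assms(4) by auto
  then show ?thesis
    using independent_card_le_dim[OF sub ind] by (simp add: rank_dim_range)
qed

lemma svd_rank_le:
  fixes A :: "real^'c^'r"
  assumes "A = (\<Sum>k=1..p. s k *\<^sub>R outer (u k) (v k))"
    "\<And>k. k \<in> {j..p} \<Longrightarrow> s k = 0" "1 \<le> j"
  shows "rank A \<le> j - 1"
proof -
  have "range (\<lambda>x. A *v x) \<subseteq> span (u ` {1..<j})"
  proof
    fix y assume "y \<in> range (\<lambda>x. A *v x)"
    then obtain x where x: "y = A *v x" by auto
    have "y = (\<Sum>k=1..p. (s k * (v k \<bullet> x)) *\<^sub>R u k)" unfolding x by (rule svd_mulv[OF assms(1)])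
    also have "\<dots> \<in> span (u ` {1..<j})"
    proof (rule span_sum)
      fix k assume k: "k \<in> {1..p}"
      show "(s k * (v k \<bullet> x)) *\<^sub>R u k \<in> span (u ` {1..<j})"
      proof (cases "k < j")
        case True then show ?thesis using k by (intro span_mul span_base) auto
      next
        case False then show ?thesis using k assms(2)[of k] by (simp add: span_zero)
      qed
    qed
    finally show "y \<in> span (u ` {1..<j})" .
  qed
  then have "rank A \<le> card (u ` {1..<j})"
    unfolding rank_dim_range by (rule dim_le_card) simp
  also have "\<dots> \<le> card {1..<j}" by (rule card_image_le) simp
  finally show ?thesis by simp
qed

lemma svd_rank:
  fixes A :: "real^'c^'r"
  assumes "is_svd A s" "rank A = r" "1 \<le> r"
  shows "r \<le> min CARD('r) CARD('c)" "s r > 0" "\<And>k. r < k \<Longrightarrow> k \<le> min CARD('r) CARD('c) \<Longrightarrow> s k = 0"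
proof -
  let ?p = "min CARD('r) CARD('c)"
  obtain u v where uv: "orthon {1..?p} u" "orthon {1..?p} v"
    "A = (\<Sum>k=1..?p. s k *\<^sub>R outer (u k) (v k))"
    "\<And>k. k \<in> {1..?p} \<Longrightarrow> 0 \<le> s k"
    "\<And>k j. 1 \<le> k \<Longrightarrow> k \<le> j \<Longrightarrow> j \<le> ?p \<Longrightarrow> s j \<le> s k"
    by (rule svd_data[OF assms(1)]) blast
  show rp: "r \<le> ?p" using rank_bound[of A] assms(2) by simp
  show "s r > 0"
  proof (rule ccontr)
    assume "\<not> s r > 0"
    then have "s r = 0" using uv(4)[of r] rp assms(3) by auto
    then have "\<And>k. k \<in> {r..?p} \<Longrightarrow> s k = 0" using uv(4,5) assms(3)
      by (metis atLeastAtMost_iff dual_order.antisym le_trans)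
    then have "rank A \<le> r - 1" using svd_rank_le[OF uv(3)] assms(3) by blast
    then show False using assms(2,3) by linarith
  qed
  fix k assume k: "r < k" "k \<le> ?p"
  show "s k = 0"
  proof (rule ccontr)
    assume sk: "s k \<noteq> 0"
    have "\<And>i. i \<in> {1..k} \<Longrightarrow> s i \<noteq> 0"
    proof -
      fix i assume i: "i \<in> {1..k}"
      have "s k \<le> s i" using uv(5)[of i k] i k by auto
      moreover have "s k > 0" using sk uv(4)[of k] k assms(3) by auto
      ultimately show "s i \<noteq> 0" by linarith
    qed
    then have "k \<le> rank A" using svd_rank_ge[OF uv(3) uv(1) uv(2) k(2)] by blast
    then show False using k assms(2) by linarith
  qed
qed

lemma psd_spectral:
  fixes A :: "real^'n^'n"
  assumes "psd A"
  obtains w :: "nat \<Rightarrow> real^'n" and mu :: "nat \<Rightarrow> real" where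
    "orthon {1..CARD('n)} w"
    "\<And>k j. 1 \<le> k \<Longrightarrow> k \<le> j \<Longrightarrow> j \<le> CARD('n) \<Longrightarrow> mu j \<le> mu k"
    "\<And>k. k \<in> {1..CARD('n)} \<Longrightarrow> A *v w k = mu k *\<^sub>R w k"
    "A = (\<Sum>k=1..CARD('n). mu k *\<^sub>R outer (w k) (w k))"
    "\<And>k. k \<in> {1..CARD('n)} \<Longrightarrow> 0 \<le> mu k"
    "is_svd A mu"
proof -
  have sym: "transpose A = A" using assms by (simp add: psd_def)
  obtain w mu where wm: "orthon {1..CARD('n)} w"
    "\<And>k j. 1 \<le> k \<Longrightarrow> k \<le> j \<Longrightarrow> j \<le> CARD('n) \<Longrightarrow> mu j \<le> mu k"
    "\<And>k. k \<in> {1..CARD('n)} \<Longrightarrow> A *v w k = mu k *\<^sub>R w k"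
    "A = (\<Sum>k=1..CARD('n). mu k *\<^sub>R outer (w k) (w k))"
    by (rule spectral_sorted[OF sym]) blast
  have nn: "0 \<le> mu k" if k: "k \<in> {1..CARD('n)}" for k
  proof -
    have "0 \<le> w k \<bullet> (A *v w k)" using assms by (simp add: psd_def)
    also have "\<dots> = mu k" using wm(3)[OF k] wm(1) k by (simp add: orthon_def)
    finally show ?thesis .
  qed
  have "is_svd A mu"
    unfolding is_svd_def Let_def using wm nn unfolding orthon_def
    by (intro conjI ballI allI impI exI[of _ w]) auto
  then show ?thesis using that wm nn by blast
qed

lemma tmul_inner:
  fixes U :: "real^'r^'n"
  shows "(transpose U *v a) \<bullet> (transpose U *v b) = a \<bullet> ((U ** transpose U) *v b)"
  using sym_inner[of a U "transpose U *v b"] unfolding matrix_vector_mul_assoc by (rule sym)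

lemma sum_split_r:
  fixes f :: "nat \<Rightarrow> 'a::comm_monoid_add"
  assumes "r \<le> n" "\<And>k. r < k \<Longrightarrow> k \<le> n \<Longrightarrow> f k = 0"
  shows "(\<Sum>k=1..n. f k) = (\<Sum>k=1..r. f k)"
proof -
  have e: "{1..n} = {1..r} \<union> {Suc r..n}" using assms(1) by auto
  have "(\<Sum>k=1..n. f k) = (\<Sum>k=1..r. f k) + (\<Sum>k=Suc r..n. f k)"
    unfolding e by (rule sum.union_disjoint) auto
  also have "(\<Sum>k=Suc r..n. f k) = 0" using assms(2) by (intro sum.neutral) auto
  finally show ?thesis by simp
qed

lemma us_svd:
  fixes Us :: "real^'r^'n" and Xs :: "real^'n^'n"
  assumes Xs: "Xs = Us ** transpose Us"
    and w: "orthon {1..CARD('n)} w"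
    and eig: "\<And>k. k \<in> {1..CARD('n)} \<Longrightarrow> Xs *v w k = mu k *\<^sub>R w k"
    and srt: "\<And>k j. 1 \<le> k \<Longrightarrow> k \<le> j \<Longrightarrow> j \<le> CARD('n) \<Longrightarrow> mu j \<le> mu k"
    and pos: "\<And>k. 1 \<le> k \<Longrightarrow> k \<le> CARD('r) \<Longrightarrow> mu k > 0"
    and zero: "\<And>k. CARD('r) < k \<Longrightarrow> k \<le> CARD('n) \<Longrightarrow> mu k = 0"
    and rn: "CARD('r) \<le> CARD('n)"
  shows "is_svd Us (\<lambda>k. sqrt (mu k))" "rank Us = CARD('r)"
proof -
  define v where "v k = (1 / sqrt (mu k)) *\<^sub>R (transpose Us *v w k)" for k
  have UTw: "(transpose Us *v w k) \<bullet> (transpose Us *v w j) = mu j * (w k \<bullet> w j)"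
    if "j \<in> {1..CARD('n)}" for k j
    using tmul_inner[of Us "w k" "w j"] eig[OF that] Xs by simp
  have vo: "orthon {1..CARD('r)} v"
    unfolding orthon_def
  proof (intro ballI)
    fix k j assume k: "k \<in> {1..CARD('r)}" and j: "j \<in> {1..CARD('r)}"
    have jn: "j \<in> {1..CARD('n)}" and kn: "k \<in> {1..CARD('n)}" using j k rn by auto
    have mj: "mu j > 0" "mu k > 0" using pos j k by auto
    have "v k \<bullet> v j = mu j * (w k \<bullet> w j) / (sqrt (mu k) * sqrt (mu j))"
      unfolding v_def using UTw[OF jn, of k] by simp
    also have "\<dots> = (if k = j then 1 else 0)"
      using w kn jn mj unfolding orthon_def by (auto simp: real_sqrt_mult[symmetric])
    finally show "v k \<bullet> v j = (if k = j then 1 else 0)" .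
  qed
  have ker: "transpose Us *v w k = 0" if "CARD('r) < k" "k \<le> CARD('n)" for k
  proof -
    have kn: "k \<in> {1..CARD('n)}" using that by auto
    have "(transpose Us *v w k) \<bullet> (transpose Us *v w k) = 0"
      using UTw[OF kn, of k] zero[OF that] by simp
    then show ?thesis by simp
  qed
  have wr: "orthon {1..CARD('r)} w" using orthon_mono[OF w] rn by auto
  have dec: "Us = (\<Sum>k=1..CARD('r). sqrt (mu k) *\<^sub>R outer (w k) (v k))"
  proof (rule matrix_eq[THEN iffD2], rule allI)
    fix x :: "real^'r"
    have c: "w k \<bullet> (Us *v x) = (transpose Us *v w k) \<bullet> x" for k
      by (rule sym_inner)
    have "Us *v x = (\<Sum>k=1..CARD('n). (w k \<bullet> (Us *v x)) *\<^sub>R w k)"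
      using parseval_expand[OF _ w, of "Us *v x"] by simp
    also have "\<dots> = (\<Sum>k=1..CARD('r). (w k \<bullet> (Us *v x)) *\<^sub>R w k)"
    proof (rule sum_split_r[OF rn])
      fix k assume k: "CARD('r) < k" "k \<le> CARD('n)"
      have "w k \<bullet> (Us *v x) = 0" unfolding c ker[OF k] by (rule inner_zero_left)
      then show "(w k \<bullet> (Us *v x)) *\<^sub>R w k = 0" by simp
    qed
    also have "\<dots> = (\<Sum>k=1..CARD('r). (sqrt (mu k) * (v k \<bullet> x)) *\<^sub>R w k)"
    proof (rule sum.cong[OF refl])
      fix k assume k: "k \<in> {1..CARD('r)}"
      have "mu k > 0" using pos k by auto
      then show "(w k \<bullet> (Us *v x)) *\<^sub>R w k = (sqrt (mu k) * (v k \<bullet> x)) *\<^sub>R w k"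
        unfolding c v_def by simp
    qed
    also have "\<dots> = (\<Sum>k=1..CARD('r). sqrt (mu k) *\<^sub>R outer (w k) (v k)) *v x"
      by (rule svd_mulv[symmetric]) (rule refl)
    finally show "Us *v x = (\<Sum>k=1..CARD('r). sqrt (mu k) *\<^sub>R outer (w k) (v k)) *v x" .
  qed
  have p: "min CARD('n) CARD('r) = CARD('r)" using rn by simp
  show "is_svd Us (\<lambda>k. sqrt (mu k))"
    unfolding is_svd_def Let_def p
  proof (intro conjI ballI allI impI exI[of _ w] exI[of _ v])
    fix k assume "k \<in> {1..CARD('r)}"
    then show "0 \<le> sqrt (mu k)" using pos by (auto intro: less_imp_le)
  next
    fix k j :: nat assume "1 \<le> k" "k \<le> j" "j \<le> CARD('r)"
    then show "sqrt (mu j) \<le> sqrt (mu k)" using srt rn by auto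
  next
    fix k j assume "k \<in> {1..CARD('r)}" "j \<in> {1..CARD('r)}"
    then show "w k \<bullet> w j = (if k = j then 1 else 0)" "v k \<bullet> v j = (if k = j then 1 else 0)"
      using wr vo unfolding orthon_def by auto
  qed (rule dec)
  have "CARD('r) \<le> rank Us"
  proof (rule svd_rank_ge[OF dec wr vo order.refl])
    fix k assume "k \<in> {1..CARD('r)}"
    then have "mu k > 0" using pos by simp
    then show "sqrt (mu k) \<noteq> 0" by simp
  qed
  moreover have "rank Us \<le> CARD('r)" using rank_bound[of Us] by simp
  ultimately show "rank Us = CARD('r)" by simp
qed

lemma is_svd_sing_val:
  assumes a: "is_svd A s"
  shows "is_svd A (sing_val A)"
proof -
  have "is_svd A (Eps (is_svd A))" using someI[of "is_svd A" s] a by blast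
  moreover have "sing_val A = Eps (is_svd A)" by (rule ext) (simp add: sing_val_def)
  ultimately show ?thesis by simp
qed

lemma sum_mono_sq:
  fixes s :: "nat \<Rightarrow> real"
  assumes "\<And>k. k \<in> K \<Longrightarrow> 0 \<le> s k \<and> s k \<le> b"
  shows "(\<Sum>k\<in>K. (s k)^2) \<le> of_nat (card K) * b^2"
proof -
  have "(\<Sum>k\<in>K. (s k)^2) \<le> (\<Sum>k\<in>K. b^2)"
    by (rule sum_mono) (use assms in \<open>auto intro: power_mono\<close>)
  then show ?thesis by simp
qed

lemma sv_facts:
  fixes Us :: "real^'r^'n" and Xs :: "real^'n^'n"
  assumes Xs: "Xs = Us ** transpose Us" and rk: "rank Xs = CARD('r)" and psd: "psd Xs"
  shows "CARD('r) \<le> CARD('n)"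
    "sing_val Xs CARD('r) > 0" "0 \<le> sing_val Xs 1"
    "Xs \<bullet> Xs \<le> real CARD('r) * (sing_val Xs 1)^2"
    "sing_val Us CARD('r) > 0"
    "\<And>x. (Us *v x) \<bullet> (Us *v x) \<ge> (sing_val Us CARD('r))^2 * (x \<bullet> x)"
    "sing_val Xs CARD('r) \<le> (sing_val Us CARD('r))^2"
proof -
  let ?r = "CARD('r)" and ?n = "CARD('n)"
  have r1: "1 \<le> ?r" by (simp add: Suc_leI)
  obtain w mu where wm: "orthon {1..?n} w"
    "\<And>k j. 1 \<le> k \<Longrightarrow> k \<le> j \<Longrightarrow> j \<le> ?n \<Longrightarrow> mu j \<le> mu k"
    "\<And>k. k \<in> {1..?n} \<Longrightarrow> Xs *v w k = mu k *\<^sub>R w k"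
    "Xs = (\<Sum>k=1..?n. mu k *\<^sub>R outer (w k) (w k))"
    "\<And>k. k \<in> {1..?n} \<Longrightarrow> 0 \<le> mu k"
    "is_svd Xs mu"
    by (rule psd_spectral[OF psd]) blast
  have rn: "?r \<le> ?n" using svd_rank(1)[OF wm(6) rk r1] by simp
  then show "?r \<le> ?n" .
  have mur: "mu ?r > 0" using svd_rank(2)[OF wm(6) rk r1] .
  have mu0: "\<And>k. ?r < k \<Longrightarrow> k \<le> ?n \<Longrightarrow> mu k = 0" using svd_rank(3)[OF wm(6) rk r1] by simp
  have mupos: "mu k > 0" if "1 \<le> k" "k \<le> ?r" for k
    using wm(2)[OF that rn] mur by linarith
  have usv: "is_svd Us (\<lambda>k. sqrt (mu k))" and rkU: "rank Us = ?r"
    using us_svd[OF Xs wm(1) wm(3) wm(2) mupos mu0 rn] by auto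
  define s where "s = sing_val Xs"
  have svX: "is_svd Xs s" unfolding s_def by (rule is_svd_sing_val[OF wm(6)])
  obtain a b where ab: "orthon {1..?n} a" "orthon {1..?n} b"
    "Xs = (\<Sum>k=1..?n. s k *\<^sub>R outer (a k) (b k))"
    "\<And>k. k \<in> {1..?n} \<Longrightarrow> 0 \<le> s k"
    "\<And>k j. 1 \<le> k \<Longrightarrow> k \<le> j \<Longrightarrow> j \<le> ?n \<Longrightarrow> s j \<le> s k"
    by (rule svd_data[OF svX, unfolded min.idem]) blast
  have sr: "s ?r > 0" using svd_rank(2)[OF svX rk r1] .
  then show "sing_val Xs ?r > 0" unfolding s_def .
  have s0: "\<And>k. ?r < k \<Longrightarrow> k \<le> ?n \<Longrightarrow> s k = 0" using svd_rank(3)[OF svX rk r1] by simp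
  have s1: "0 \<le> s 1" using ab(4)[of 1] r1 rn by auto
  then show "0 \<le> sing_val Xs 1" unfolding s_def .
  have "Xs \<bullet> Xs = (\<Sum>k=1..?n. (s k)^2)" by (rule svd_norm[OF ab(3) _ ab(1,2)]) simp
  also have "\<dots> = (\<Sum>k=1..?r. (s k)^2)" by (rule sum_split_r[OF rn]) (simp add: s0)
  also have "\<dots> \<le> real (card {1..?r}) * (s 1)^2"
    by (rule sum_mono_sq) (use ab(4,5) rn in auto)
  finally show "Xs \<bullet> Xs \<le> real ?r * (sing_val Xs 1)^2" unfolding s_def by simp
  define t where "t = sing_val Us"
  have svU: "is_svd Us t" unfolding t_def by (rule is_svd_sing_val[OF usv])
  have pU: "min ?n ?r = ?r" using rn by simp
  obtain u' v' where uv: "orthon {1..?r} u'" "orthon {1..?r} v'"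
    "Us = (\<Sum>k=1..?r. t k *\<^sub>R outer (u' k) (v' k))"
    "\<And>k. k \<in> {1..?r} \<Longrightarrow> 0 \<le> t k"
    "\<And>k j. 1 \<le> k \<Longrightarrow> k \<le> j \<Longrightarrow> j \<le> ?r \<Longrightarrow> t j \<le> t k"
    by (rule svd_data[OF svU, unfolded pU]) blast
  have tr: "t ?r > 0" using svd_rank(2)[OF svU rkU r1] .
  then show "sing_val Us ?r > 0" unfolding t_def .
  show "(Us *v x) \<bullet> (Us *v x) \<ge> (sing_val Us ?r)^2 * (x \<bullet> x)" for x
  proof -
    have "(Us *v x) \<bullet> (Us *v x) = (\<Sum>k=1..?r. (t k)^2 * (v' k \<bullet> x)^2)"
      by (rule svd_norm_mulv[OF uv(3) _ uv(1)]) simp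
    also have "\<dots> \<ge> (\<Sum>k=1..?r. (t ?r)^2 * (v' k \<bullet> x)^2)"
      by (rule sum_mono, rule mult_right_mono, rule power_mono) (use uv(4,5) tr in auto)
    moreover have "(\<Sum>k=1..?r. (t ?r)^2 * (v' k \<bullet> x)^2) = (t ?r)^2 * (x \<bullet> x)"
      using parseval[OF _ uv(2), of x] by (simp add: sum_distrib_left[symmetric])
    ultimately show ?thesis unfolding t_def by simp
  qed
  define x where "x = u' ?r"
  have rr: "?r \<in> {1..?r}" using r1 by simp
  have xx: "x \<bullet> x = 1" using uv(1) rr unfolding x_def orthon_def by simp
  have "transpose Us *v x = t ?r *\<^sub>R v' ?r"
    unfolding x_def by (rule svd_at_u[OF uv(3) _ uv(1) rr]) simp
  moreover have "Us *v v' ?r = t ?r *\<^sub>R u' ?r" by (rule svd_at_v[OF uv(3) _ uv(2) rr]) simp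
  ultimately have Xx: "Xs *v x = (t ?r)^2 *\<^sub>R x"
    unfolding Xs x_def by (simp add: matrix_vector_mul_assoc[symmetric] matrix_vector_mult_scaleR power2_eq_square)
  have tX: "transpose Xs = Xs" unfolding Xs by (simp add: matrix_transpose_mul)
  have "transpose Xs *v x = (\<Sum>k=1..?n. (s k * (a k \<bullet> x)) *\<^sub>R b k)" by (rule svd_tmulv[OF ab(3)])
  also have "\<dots> = (\<Sum>k=1..?r. (s k * (a k \<bullet> x)) *\<^sub>R b k)" by (rule sum_split_r[OF rn]) (simp add: s0)
  finally have e1: "(t ?r)^2 *\<^sub>R x = (\<Sum>k=1..?r. (s k * (a k \<bullet> x)) *\<^sub>R b k)" using Xx tX by simp
  define d where "d k = s k * (a k \<bullet> x) / (t ?r)^2" for k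
  have t2: "(t ?r)^2 > 0" using tr by simp
  have xe: "x = (\<Sum>k=1..?r. d k *\<^sub>R b k)"
  proof -
    have "x = (1 / (t ?r)^2) *\<^sub>R ((t ?r)^2 *\<^sub>R x)" using t2 by simp
    also have "\<dots> = (\<Sum>k=1..?r. d k *\<^sub>R b k)" unfolding e1 d_def scaleR_sum_right by (simp add: divide_inverse mult.commute)
    finally show ?thesis .
  qed
  have bor: "orthon {1..?r} b" using orthon_mono[OF ab(2)] rn by auto
  have aor: "orthon {1..?r} a" using orthon_mono[OF ab(1)] rn by auto
  have dsum: "(\<Sum>k=1..?r. (d k)^2) = 1"
    using xx inner_sum_orthon[OF _ bor, of d d] xe by (simp add: power2_eq_square)
  have bx: "b k \<bullet> x = d k" if "k \<in> {1..?r}" for k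
    using inner_sum_orthon_vec[OF _ bor that, of d] xe by simp
  have "(Xs *v x) \<bullet> (Xs *v x) = (\<Sum>k=1..?n. (s k)^2 * (b k \<bullet> x)^2)"
    by (rule svd_norm_mulv[OF ab(3) _ ab(1)]) simp
  also have "\<dots> = (\<Sum>k=1..?r. (s k)^2 * (b k \<bullet> x)^2)" by (rule sum_split_r[OF rn]) (simp add: s0)
  also have "\<dots> = (\<Sum>k=1..?r. (s k)^2 * (d k)^2)" by (rule sum.cong) (simp_all add: bx)
  also have "\<dots> \<ge> (\<Sum>k=1..?r. (s ?r)^2 * (d k)^2)"
    by (rule sum_mono, rule mult_right_mono, rule power_mono) (use ab(4,5) rn sr in auto)
  moreover have "(\<Sum>k=1..?r. (s ?r)^2 * (d k)^2) = (s ?r)^2"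
    using dsum by (simp add: sum_distrib_left[symmetric])
  moreover have "(Xs *v x) \<bullet> (Xs *v x) = ((t ?r)^2)^2"
    using Xx xx by (simp add: power2_eq_square)
  ultimately have "(s ?r)^2 \<le> ((t ?r)^2)^2" by simp
  then have "s ?r \<le> (t ?r)^2" by (rule power2_le_imp_le) simp
  then show "sing_val Xs ?r \<le> (sing_val Us ?r)^2" unfolding s_def t_def .
qed

lemma mulv_nth: "((A::real^'n^'m) *v x) $ i = A $ i \<bullet> x"
  by (simp add: matrix_vector_mult_def inner_vec_def inner_real_def mult.commute)

lemma frob_ge:
  fixes A :: "real^'n^'m"
  assumes "finite K" "orthon K w"
  shows "(\<Sum>k\<in>K. (A *v w k) \<bullet> (A *v w k)) \<le> A \<bullet> A"
proof -
  have "(\<Sum>k\<in>K. (A *v w k) \<bullet> (A *v w k)) = (\<Sum>k\<in>K. \<Sum>i\<in>UNIV. (A $ i \<bullet> w k)^2)"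
    unfolding inner_vec_def[of "A *v w _"] by (simp add: mulv_nth power2_eq_square inner_real_def)
  also have "\<dots> = (\<Sum>i\<in>UNIV. \<Sum>k\<in>K. (A $ i \<bullet> w k)^2)" by (rule sum.swap)
  also have "\<dots> \<le> (\<Sum>i\<in>UNIV. A $ i \<bullet> A $ i)"
  proof (rule sum_mono)
    fix i show "(\<Sum>k\<in>K. (A $ i \<bullet> w k)^2) \<le> A $ i \<bullet> A $ i"
      using bessel[OF assms, of "A$i"] by (simp add: inner_commute)
  qed
  also have "\<dots> = A \<bullet> A" by (simp add: inner_vec_def)
  finally show ?thesis .
qed

lemma lp_bound:
  fixes c mu :: "'i \<Rightarrow> real"
  assumes U: "finite U" and SU: "S \<subseteq> U" and Sne: "S \<noteq> {}"
    and c: "\<And>i. i \<in> U \<Longrightarrow> 0 \<le> c i \<and> c i \<le> 1"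
    and cs: "(\<Sum>i\<in>U. c i) = real (card (U - S))"
    and ord: "\<And>i j. i \<in> S \<Longrightarrow> j \<in> U - S \<Longrightarrow> mu j \<le> mu i"
  shows "(\<Sum>i\<in>U - S. mu i) \<le> (\<Sum>i\<in>U. c i * mu i)"
proof -
  define th where "th = Min (mu ` S)"
  have fS: "finite S" using U SU finite_subset by auto
  have thS: "th \<le> mu i" if "i \<in> S" for i unfolding th_def using fS that by simp
  have thU: "mu j \<le> th" if "j \<in> U - S" for j
    unfolding th_def using fS Sne that ord by (simp add: Min_ge_iff)
  have split: "(\<Sum>i\<in>U. f i) = (\<Sum>i\<in>S. f i) + (\<Sum>i\<in>U - S. f i)" for f :: "'i \<Rightarrow> real"
    using sum.subset_diff[OF SU U] by (simp add: add.commute)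
  have "(\<Sum>i\<in>U. c i * mu i) - (\<Sum>i\<in>U - S. mu i)
      = (\<Sum>i\<in>S. c i * mu i) - (\<Sum>i\<in>U - S. (1 - c i) * mu i)"
    unfolding split[of "\<lambda>i. c i * mu i"] by (simp add: algebra_simps sum_subtractf)
  also have "\<dots> \<ge> (\<Sum>i\<in>S. c i * th) - (\<Sum>i\<in>U - S. (1 - c i) * th)"
  proof -
    have "(\<Sum>i\<in>S. c i * th) \<le> (\<Sum>i\<in>S. c i * mu i)"
      by (rule sum_mono, rule mult_left_mono) (use thS c SU in auto)
    moreover have "(\<Sum>i\<in>U - S. (1 - c i) * mu i) \<le> (\<Sum>i\<in>U - S. (1 - c i) * th)"
      by (rule sum_mono, rule mult_left_mono) (use thU c in auto)
    ultimately show ?thesis by linarith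
  qed
  also have "(\<Sum>i\<in>S. c i * th) - (\<Sum>i\<in>U - S. (1 - c i) * th)
      = th * ((\<Sum>i\<in>U. c i) - real (card (U - S)))"
    unfolding split[of c] by (simp add: sum_distrib_left sum_distrib_right algebra_simps sum_subtractf)
  also have "\<dots> = 0" using cs by simp
  finally show ?thesis by simp
qed

lemma trunc_bound:
  fixes X0 X0r Xs :: "real^'n^'n"
  assumes psd: "psd X0" and te: "trunc_eig X0 r X0r"
    and w: "orthon {1..CARD('n)} w" and ker: "\<And>k. r < k \<Longrightarrow> k \<le> CARD('n) \<Longrightarrow> Xs *v w k = 0"
    and rn: "r \<le> CARD('n)" and r1: "1 \<le> r"
  shows "(X0 - X0r) \<bullet> (X0 - X0r) \<le> (X0 - Xs) \<bullet> (X0 - Xs)"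
proof -
  obtain lam :: "'n \<Rightarrow> real" and q :: "'n \<Rightarrow> real^'n" and S where
    q: "\<forall>i j. q i \<bullet> q j = (if i = j then 1 else 0)"
    and X0: "X0 = (\<Sum>i\<in>UNIV. lam i *\<^sub>R outer (q i) (q i))"
    and cS: "card S = r" and ord: "\<forall>i\<in>S. \<forall>j. j \<notin> S \<longrightarrow> lam j \<le> lam i"
    and X0r: "X0r = (\<Sum>i\<in>S. lam i *\<^sub>R outer (q i) (q i))"
    using te unfolding trunc_eig_def by blast
  have qo: "orthon UNIV q" using q by (simp add: orthon_def)
  have lam0: "0 \<le> lam i" for i
  proof -
    have "X0 *v q i = lam i *\<^sub>R q i" by (rule svd_at_v[OF X0 _ qo]) simp_all
    moreover have "0 \<le> q i \<bullet> (X0 *v q i)" using psd by (simp add: psd_def)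
    ultimately show ?thesis using q by simp
  qed
  have "X0 - X0r = (\<Sum>i\<in>UNIV - S. lam i *\<^sub>R outer (q i) (q i))"
    unfolding X0 X0r by (simp add: sum_diff)
  then have n1: "(X0 - X0r) \<bullet> (X0 - X0r) = (\<Sum>i\<in>UNIV - S. (lam i)^2)"
    by (rule svd_norm) (use qo in \<open>auto intro: orthon_mono\<close>)
  define W where "W = {Suc r..CARD('n)}"
  have wW: "orthon W w" using orthon_mono[OF w] r1 unfolding W_def by auto
  define c where "c i = (\<Sum>k\<in>W. (w k \<bullet> q i)^2)" for i
  have c01: "0 \<le> c i \<and> c i \<le> 1" for i
  proof
    show "0 \<le> c i" unfolding c_def by (simp add: sum_nonneg)
    show "c i \<le> 1" unfolding c_def using bessel[OF _ wW, of "q i"] q W_def by simp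
  qed
  have csum: "(\<Sum>i\<in>UNIV. c i) = real (card (UNIV - S))"
  proof -
    have "(\<Sum>i\<in>UNIV. c i) = (\<Sum>k\<in>W. \<Sum>i\<in>UNIV. (q i \<bullet> w k)^2)"
      unfolding c_def by (subst sum.swap) (simp add: inner_commute)
    also have "\<dots> = (\<Sum>k\<in>W. 1)"
      using parseval[OF _ qo, of "w _"] wW unfolding W_def orthon_def by (intro sum.cong refl) simp
    also have "\<dots> = real (CARD('n) - r)" unfolding W_def by simp
    also have "card (UNIV - S) = CARD('n) - r" using cS by (simp add: card_Diff_subset)
    ultimately show ?thesis by simp
  qed
  have "(\<Sum>i\<in>UNIV - S. (lam i)^2) \<le> (\<Sum>i\<in>UNIV. c i * (lam i)^2)"
  proof (rule lp_bound[OF _ _ _ c01 csum])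
    show "S \<noteq> {}" using cS r1 by auto
    show "\<And>i j. i \<in> S \<Longrightarrow> j \<in> UNIV - S \<Longrightarrow> (lam j)^2 \<le> (lam i)^2"
      using ord lam0 by (auto intro: power_mono)
  qed auto
  also have "\<dots> = (\<Sum>k\<in>W. (X0 *v w k) \<bullet> (X0 *v w k))"
  proof -
    have "(\<Sum>k\<in>W. (X0 *v w k) \<bullet> (X0 *v w k)) = (\<Sum>k\<in>W. \<Sum>i\<in>UNIV. (lam i)^2 * (q i \<bullet> w k)^2)"
      by (intro sum.cong refl svd_norm_mulv[OF X0]) (simp_all add: qo)
    also have "\<dots> = (\<Sum>i\<in>UNIV. \<Sum>k\<in>W. (lam i)^2 * (q i \<bullet> w k)^2)"
      by (rule sum.swap)
    also have "\<dots> = (\<Sum>i\<in>UNIV. c i * (lam i)^2)"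
      unfolding c_def by (simp add: sum_distrib_left inner_commute mult.commute)
    finally show ?thesis by simp
  qed
  also have "\<dots> = (\<Sum>k\<in>W. ((X0 - Xs) *v w k) \<bullet> ((X0 - Xs) *v w k))"
    by (intro sum.cong refl) (simp add: matrix_vector_mult_diff_rdistrib ker W_def)
  also have "\<dots> \<le> (X0 - Xs) \<bullet> (X0 - Xs)" by (rule frob_ge[OF _ wW]) (simp add: W_def)
  finally show ?thesis using n1 by simp
qed

lemma psd_add: "psd A \<Longrightarrow> psd B \<Longrightarrow> psd (A + B)"
  unfolding psd_def by (auto simp: matrix_vector_mult_add_rdistrib inner_add_right transpose_def vec_eq_iff
      intro: add_nonneg_nonneg)

lemma psd_scale: "psd A \<Longrightarrow> 0 \<le> c \<Longrightarrow> psd (c *\<^sub>R A)"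
  unfolding psd_def by (auto simp: scaleR_mulv transpose_scalar)

lemma psd_zero: "psd (0::real^'n^'n)"
  unfolding psd_def by (simp add: transpose_def vec_eq_iff)

lemma psd_outer: "psd (outer e e)"
proof -
  have "x \<bullet> (outer e e *v x) = (e \<bullet> x)^2" for x
    by (simp add: outer_mulv inner_commute power2_eq_square)
  then show ?thesis unfolding psd_def by (simp add: transpose_outer)
qed

lemma convex_psd: "convex (psd_cone :: (real^'n^'n) set)"
proof (rule convexI)
  fix A B :: "real^'n^'n" and u v :: real
  assume "A \<in> psd_cone" "B \<in> psd_cone" "0 \<le> u" "0 \<le> v" "u + v = 1"
  then show "u *\<^sub>R A + v *\<^sub>R B \<in> psd_cone"
    unfolding psd_cone_def by (auto intro!: psd_add psd_scale)
qed

lemma closed_psd: "closed (psd_cone :: (real^'n^'n) set)"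
proof -
  have e: "psd_cone = {A::real^'n^'n. \<forall>i. \<forall>j. A$i$j = A$j$i} \<inter> {A. \<forall>x. 0 \<le> (\<Sum>i\<in>UNIV. x$i * (\<Sum>j\<in>UNIV. A$i$j * x$j))}"
    unfolding psd_cone_def psd_def
    by (auto simp: transpose_def vec_eq_iff inner_vec_def matrix_vector_mult_def inner_real_def mult.commute)
  show ?thesis unfolding e
    by (intro closed_Int closed_Collect_all closed_Collect_eq closed_Collect_le continuous_intros)
qed

lemma psd_cone_ne: "(0::real^'n^'n) \<in> psd_cone"
  by (simp add: psd_cone_def psd_zero)

lemma closest_scale:
  fixes y :: "real^'n^'n"
  assumes c: "c > 0"
  shows "closest_point psd_cone (c *\<^sub>R y) = c *\<^sub>R closest_point psd_cone y"
proof -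
  let ?C = "psd_cone :: (real^'n^'n) set"
  let ?p = "closest_point ?C y"
  have pC: "?p \<in> ?C" by (rule closest_point_in_set[OF closed_psd]) (use psd_cone_ne in auto)
  have cpC: "c *\<^sub>R ?p \<in> ?C" using pC c unfolding psd_cone_def by (auto intro: psd_scale)
  show ?thesis
  proof (rule closest_point_unique[OF convex_psd closed_psd cpC, symmetric], intro ballI)
    fix z assume zC: "z \<in> ?C"
    have "(1/c) *\<^sub>R z \<in> ?C" using zC c unfolding psd_cone_def by (auto intro: psd_scale)
    then have "dist y ?p \<le> dist y ((1/c) *\<^sub>R z)" by (rule closest_point_le[OF closed_psd])
    then have "c * dist y ?p \<le> c * dist y ((1/c) *\<^sub>R z)" using c by simp
    moreover have "c * dist y ?p = dist (c *\<^sub>R y) (c *\<^sub>R ?p)"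
      using c by (simp add: dist_norm scaleR_diff_right[symmetric])
    moreover have "c * dist y ((1/c) *\<^sub>R z) = dist (c *\<^sub>R y) z"
    proof -
      have "c *\<^sub>R (y - (1/c) *\<^sub>R z) = c *\<^sub>R y - z" using c by (simp add: scaleR_diff_right)
      then show ?thesis using c by (simp add: dist_norm) (metis abs_of_pos norm_scaleR)
    qed
    ultimately show "dist (c *\<^sub>R y) (c *\<^sub>R ?p) \<le> dist (c *\<^sub>R y) z" by simp
  qed
qed

lemma vi_fixpoint:
  fixes X g :: "real^'n^'n"
  assumes XC: "X \<in> psd_cone" and vi: "\<And>Y. Y \<in> psd_cone \<Longrightarrow> g \<bullet> (Y - X) \<ge> 0" and L: "L > 0"
  shows "closest_point psd_cone (X - (1/L) *\<^sub>R g) = X"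
proof (rule closest_point_unique[OF convex_psd closed_psd XC, symmetric], intro ballI)
  fix z :: "real^'n^'n" assume zC: "z \<in> psd_cone"
  let ?a = "X - (1/L) *\<^sub>R g"
  have gz: "g \<bullet> (z - X) \<ge> 0" using vi[OF zC] .
  have "(dist ?a z)^2 = (norm ((X - z) - (1/L) *\<^sub>R g))^2" by (simp add: dist_norm algebra_simps)
  also have "\<dots> = (norm (X - z))^2 - 2 * ((X - z) \<bullet> ((1/L) *\<^sub>R g)) + (norm ((1/L) *\<^sub>R g))^2"
    unfolding power2_norm_eq_inner by (simp add: inner_diff_left inner_diff_right inner_commute algebra_simps)
  also have "(X - z) \<bullet> ((1/L) *\<^sub>R g) = - (1/L) * (g \<bullet> (z - X))"
    by (simp add: inner_diff_left inner_diff_right inner_commute) (metis minus_diff_eq minus_divide_left)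
  also have "(norm ((1/L) *\<^sub>R g))^2 = (1/L)^2 * (norm g)^2"
    using L by (simp add: power_divide)
  also have "(norm (X - z))^2 - 2 * (- (1/L) * (g \<bullet> (z - X))) + (1/L)^2 * (norm g)^2
     = (norm (X - z))^2 + (2/L) * (g \<bullet> (z - X)) + (1/L)^2 * (norm g)^2" by (simp add: algebra_simps)
  also have "\<dots> \<ge> (1/L)^2 * (norm g)^2" using gz L by (simp add: add_nonneg_nonneg)
  moreover have "(dist ?a X)^2 = (1/L)^2 * (norm g)^2" using L by (simp add: dist_norm power_divide)
  ultimately have "(dist ?a X)^2 \<le> (dist ?a z)^2" by simp
  then show "dist ?a X \<le> dist ?a z" by (simp add: power2_le_iff_abs_le)
qed

lemma small_t:
  fixes a B :: real
  assumes B: "B \<ge> 0" and h: "\<And>t. 0 < t \<Longrightarrow> t \<le> 1 \<Longrightarrow> a \<ge> - B * t"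
  shows "a \<ge> 0"
proof (rule ccontr)
  assume "\<not> a \<ge> 0"
  then have a: "a < 0" by simp
  define t where "t = min 1 (- a / (2 * (B + 1)))"
  have t0: "0 < t" unfolding t_def using a B by (simp add: field_simps)
  have t1: "t \<le> 1" unfolding t_def by simp
  have "B * t \<le> B * (- a / (2 * (B + 1)))" unfolding t_def using B by (intro mult_left_mono) auto
  also have "\<dots> = (-a) * (B / (2 * (B + 1)))" by (simp add: field_simps)
  also have "\<dots> < (-a) * 1"
  proof (rule mult_strict_left_mono)
    show "B / (2 * (B + 1)) < 1" using B by (simp add: field_simps)
  qed (use a in simp)
  finally have "- B * t > a" by simp
  then show False using h[OF t0 t1] by simp
qed

lemma init_bound:
  fixes f :: "real^'n^'n \<Rightarrow> real" and grad :: "real^'n^'n \<Rightarrow> real^'n^'n"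
    and M m :: real and i1 :: 'n and Xs X0 :: "real^'n^'n"
  assumes smooth: "\<And>X Y. X \<in> psd_cone \<Longrightarrow> Y \<in> psd_cone \<Longrightarrow> norm (grad X - grad Y) \<le> M * norm (X - Y)"
    and strong: "\<And>X Y. X \<in> psd_cone \<Longrightarrow> Y \<in> psd_cone \<Longrightarrow>
                   f Y \<ge> f X + grad X \<bullet> (Y - X) + m / 2 * (norm (Y - X))\<^sup>2"
    and mpos: "m > 0"
    and Xs_psd: "Xs \<in> psd_cone"
    and Xs_min: "\<And>Y. Y \<in> psd_cone \<Longrightarrow> f Xs \<le> f Y"
    and X0_def: "X0 = (1 / norm (grad 0 - grad (outer (axis i1 1) (axis i1 1)))) *\<^sub>R proj_psd (- grad 0)"
  shows "(X0 - Xs) \<bullet> (X0 - Xs) \<le> ((M / m)\<^sup>2 - 2 / (M / m) + 1) * (Xs \<bullet> Xs)"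
    "psd X0" "m \<le> M"
proof -
  let ?C = "psd_cone :: (real^'n^'n) set"
  define E where "E = outer (axis i1 1) (axis i1 (1::real))"
  have EC: "E \<in> ?C" unfolding E_def psd_cone_def by (simp add: psd_outer)
  have 0: "(0::real^'n^'n) \<in> ?C" by (rule psd_cone_ne)
  have EE: "E \<bullet> E = 1" unfolding E_def by (simp add: inner_outer)
  then have nE: "norm E = 1" by (simp add: norm_eq_sqrt_inner)
  have mono: "(grad Y - grad X) \<bullet> (Y - X) \<ge> m * (norm (Y - X))^2" if "X \<in> ?C" "Y \<in> ?C" for X Y
  proof -
    have "f Y \<ge> f X + grad X \<bullet> (Y - X) + m / 2 * (norm (Y - X))\<^sup>2" by (rule strong[OF that])
    moreover have "f X \<ge> f Y + grad Y \<bullet> (X - Y) + m / 2 * (norm (X - Y))\<^sup>2" by (rule strong[OF that(2,1)])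
    moreover have "norm (X - Y) = norm (Y - X)" by (rule norm_minus_commute)
    moreover have "grad Y \<bullet> (X - Y) = - (grad Y \<bullet> (Y - X))" by (simp add: inner_diff_right)
    ultimately show ?thesis by (simp add: inner_diff_left)
  qed
  define L where "L = norm (grad 0 - grad E)"
  have LM: "L \<le> M" using smooth[OF 0 EC] nE unfolding L_def by simp
  have mL: "m \<le> L"
  proof -
    have "m * (norm (E - 0))^2 \<le> (grad E - grad 0) \<bullet> (E - 0)" by (rule mono[OF 0 EC])
    also have "\<dots> \<le> norm (grad E - grad 0) * norm (E - 0)" by (rule norm_cauchy_schwarz)
    finally show ?thesis using nE unfolding L_def by (simp add: norm_minus_commute)
  qed
  have L0: "L > 0" using mpos mL by simp
  show "m \<le> M" using mL LM by simp
  have M0: "M \<ge> 0" using mpos mL LM by simp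
  have vi: "grad Xs \<bullet> (Y - Xs) \<ge> 0" if YC: "Y \<in> ?C" for Y
  proof (rule small_t[of "M * (norm (Y - Xs))^2"])
    show "M * (norm (Y - Xs))^2 \<ge> 0" using M0 by simp
    fix t :: real assume t: "0 < t" "t \<le> 1"
    define d where "d = Y - Xs"
    define Z where "Z = Xs + t *\<^sub>R d"
    have "Z = (1 - t) *\<^sub>R Xs + t *\<^sub>R Y" unfolding Z_def d_def by (simp add: algebra_simps)
    then have ZC: "Z \<in> ?C" using convexD[OF convex_psd Xs_psd YC, of "1 - t" t] t by simp
    have "f Xs \<ge> f Z + grad Z \<bullet> (Xs - Z) + m / 2 * (norm (Xs - Z))\<^sup>2" by (rule strong[OF ZC Xs_psd])
    moreover have "f Z \<ge> f Xs" by (rule Xs_min[OF ZC])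
    moreover have "m / 2 * (norm (Xs - Z))\<^sup>2 \<ge> 0" using mpos by simp
    ultimately have "grad Z \<bullet> (Xs - Z) \<le> 0" by linarith
    moreover have "Xs - Z = - t *\<^sub>R d" unfolding Z_def by simp
    ultimately have "t * (grad Z \<bullet> d) \<ge> 0" by simp
    then have gZ: "grad Z \<bullet> d \<ge> 0" using t by (simp add: zero_le_mult_iff)
    have "norm (grad Z - grad Xs) \<le> M * norm (Z - Xs)" by (rule smooth[OF ZC Xs_psd])
    also have "norm (Z - Xs) = t * norm d" unfolding Z_def using t by simp
    finally have gd: "norm (grad Z - grad Xs) \<le> M * (t * norm d)" .
    have "(grad Z - grad Xs) \<bullet> d \<le> norm (grad Z - grad Xs) * norm d" by (rule norm_cauchy_schwarz)
    also have "\<dots> \<le> M * (t * norm d) * norm d" by (rule mult_right_mono[OF gd]) simp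
    finally have "(grad Z - grad Xs) \<bullet> d \<le> M * (norm d)^2 * t" by (simp add: power2_eq_square mult_ac)
    then show "grad Xs \<bullet> (Y - Xs) \<ge> - (M * (norm (Y - Xs))^2) * t"
      using gZ unfolding d_def[symmetric] by (simp add: inner_diff_left)
  qed
  have fixp: "closest_point ?C (Xs - (1/L) *\<^sub>R grad Xs) = Xs" by (rule vi_fixpoint[OF Xs_psd vi L0])
  have X0e: "X0 = closest_point ?C (0 - (1/L) *\<^sub>R grad 0)"
    unfolding X0_def proj_psd_def L_def[symmetric] E_def[symmetric]
    using closest_scale[of "1/L" "- grad 0"] L0 by simp
  have X0C: "X0 \<in> ?C" unfolding X0e by (rule closest_point_in_set[OF closed_psd]) (use 0 in auto)
  then show "psd X0" by (simp add: psd_cone_def)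
  have "dist X0 Xs \<le> dist (0 - (1/L) *\<^sub>R grad 0) (Xs - (1/L) *\<^sub>R grad Xs)"
    unfolding X0e using closest_point_lipschitz[OF convex_psd closed_psd, of "0 - (1/L) *\<^sub>R grad 0" "Xs - (1/L) *\<^sub>R grad Xs"] fixp 0
    by auto
  also have "\<dots> = norm (Xs - (1/L) *\<^sub>R (grad Xs - grad 0))"
    by (simp add: dist_norm norm_minus_commute algebra_simps)
  finally have dX: "norm (X0 - Xs) \<le> norm (Xs - (1/L) *\<^sub>R (grad Xs - grad 0))" by (simp add: dist_norm)
  define G where "G = grad Xs - grad 0"
  have Gm: "G \<bullet> Xs \<ge> m * (Xs \<bullet> Xs)" using mono[OF 0 Xs_psd] unfolding G_def by (simp add: power2_norm_eq_inner)
  have GM: "G \<bullet> G \<le> M^2 * (Xs \<bullet> Xs)"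
  proof -
    have "norm G \<le> M * norm Xs" using smooth[OF Xs_psd 0] unfolding G_def by simp
    then have "(norm G)^2 \<le> (M * norm Xs)^2" by (rule power_mono) simp
    then show ?thesis by (simp add: power2_norm_eq_inner power_mult_distrib)
  qed
  have "(X0 - Xs) \<bullet> (X0 - Xs) \<le> (Xs - (1/L) *\<^sub>R G) \<bullet> (Xs - (1/L) *\<^sub>R G)"
    using power_mono[OF dX norm_ge_zero, of 2] unfolding G_def by (simp add: power2_norm_eq_inner)
  also have "\<dots> = Xs \<bullet> Xs - 2 * (1/L) * (G \<bullet> Xs) + (1/L)^2 * (G \<bullet> G)"
    by (simp add: inner_diff_left inner_diff_right inner_commute power2_eq_square algebra_simps)
  also have "\<dots> \<le> Xs \<bullet> Xs - 2 * (1/L) * (m * (Xs \<bullet> Xs)) + (1/L)^2 * (M^2 * (Xs \<bullet> Xs))"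
  proof -
    have "2 * (1/L) * (m * (Xs \<bullet> Xs)) \<le> 2 * (1/L) * (G \<bullet> Xs)" by (rule mult_left_mono) (use Gm L0 in auto)
    moreover have "(1/L)^2 * (G \<bullet> G) \<le> (1/L)^2 * (M^2 * (Xs \<bullet> Xs))" using GM by (simp add: mult_left_mono)
    ultimately show ?thesis by linarith
  qed
  also have "\<dots> = (1 - 2 * m * (1/L) + M^2 * (1/L)^2) * (Xs \<bullet> Xs)" by (simp add: algebra_simps)
  also have "\<dots> \<le> ((M / m)\<^sup>2 - 2 / (M / m) + 1) * (Xs \<bullet> Xs)"
  proof (rule mult_right_mono)
    have a1: "1/L \<le> 1/m" using mL mpos by (simp add: frac_le)
    have a2: "1/M \<le> 1/L" using LM L0 by (simp add: frac_le)
    have "M^2 * (1/L)^2 \<le> M^2 * (1/m)^2" using a1 L0 by (intro mult_left_mono power_mono) auto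
    moreover have "2 * m * (1/M) \<le> 2 * m * (1/L)" by (rule mult_left_mono) (use a2 mpos in auto)
    moreover have "M^2 * (1/m)^2 = (M/m)^2" by (simp add: power_divide)
    moreover have "2 / (M / m) = 2 * m * (1/M)" by simp
    ultimately show "1 - 2 * m * (1/L) + M^2 * (1/L)^2 \<le> (M / m)\<^sup>2 - 2 / (M / m) + 1" by linarith
  qed simp
  finally show "(X0 - Xs) \<bullet> (X0 - Xs) \<le> ((M / m)\<^sup>2 - 2 / (M / m) + 1) * (Xs \<bullet> Xs)" .
qed

definition hrefl :: "real^'r \<Rightarrow> real^'r^'r" where
  "hrefl z = mat 1 - (2 / (z \<bullet> z)) *\<^sub>R outer z z"

lemma hrefl_mulv: "hrefl z *v x = x - ((2 / (z \<bullet> z)) * (z \<bullet> x)) *\<^sub>R z"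
  unfolding hrefl_def by (simp add: matrix_vector_mult_diff_rdistrib scaleR_mulv outer_mulv)

lemma hrefl_orth:
  assumes "z \<noteq> 0"
  shows "orthogonal_matrix (hrefl z)"
proof -
  have t: "transpose (hrefl z) = hrefl z"
    unfolding hrefl_def by (simp add: transpose_def vec_eq_iff outer_def mat_def mult.commute)
  have "hrefl z ** hrefl z = mat 1"
  proof (rule matrix_eq[THEN iffD2], rule allI)
    fix x
    have zz: "z \<bullet> z \<noteq> 0" using assms by simp
    show "(hrefl z ** hrefl z) *v x = mat 1 *v x"
      unfolding matrix_vector_mul_assoc[symmetric] hrefl_mulv
      using zz by (simp add: inner_diff_right algebra_simps field_simps)
  qed
  then show ?thesis unfolding orthogonal_matrix t .
qed

lemma trace_mul_diff: "trace ((T::real^'r^'r) ** (A - B)) = trace (T ** A) - trace (T ** B)"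
  by (simp add: trace_def matrix_matrix_mult_def sum_subtractf right_diff_distrib)

lemma trace_mul_add: "trace ((T::real^'r^'r) ** (A + B)) = trace (T ** A) + trace (T ** B)"
  by (simp add: trace_def matrix_matrix_mult_def sum.distrib distrib_left)

lemma trace_mul_scale: "trace ((T::real^'r^'r) ** (c *\<^sub>R A)) = c * trace (T ** A)"
  by (simp add: trace_def matrix_matrix_mult_def sum_distrib_left mult_ac)

lemma trace_mul_outer: "trace ((T::real^'r^'r) ** outer a b) = b \<bullet> (T *v a)"
  by (simp add: trace_def matrix_matrix_mult_def outer_def inner_vec_def matrix_vector_mult_def
      sum_distrib_left mult_ac inner_real_def)

lemma trace_mul_id: "trace ((T::real^'r^'r) ** mat 1) = trace T"
  by simp

lemma trace_hrefl: "trace (T ** hrefl z) = trace T - (2 / (z \<bullet> z)) * (z \<bullet> (T *v z))"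
  unfolding hrefl_def trace_mul_diff trace_mul_scale trace_mul_outer by simp

lemma hrefl_prod:
  assumes w: "w \<bullet> w = 1"
  shows "hrefl z ** hrefl w = mat 1 - (2 / (z \<bullet> z)) *\<^sub>R outer z z - 2 *\<^sub>R outer w w
            + (4 / (z \<bullet> z) * (z \<bullet> w)) *\<^sub>R outer z w"
proof (rule matrix_eq[THEN iffD2], rule allI)
  fix x
  show "(hrefl z ** hrefl w) *v x = (mat 1 - (2 / (z \<bullet> z)) *\<^sub>R outer z z - 2 *\<^sub>R outer w w
            + (4 / (z \<bullet> z) * (z \<bullet> w)) *\<^sub>R outer z w) *v x"
    unfolding matrix_vector_mul_assoc[symmetric] hrefl_mulv
    using w by (simp add: matrix_vector_mult_diff_rdistrib matrix_vector_mult_add_rdistrib scaleR_mulv outer_mulv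
        inner_diff_right algebra_simps)
qed

lemma trace_cond_psd:
  fixes T :: "real^'r^'r"
  assumes opt: "\<And>Q. orthogonal_matrix Q \<Longrightarrow> trace (T ** Q) \<le> trace T"
  shows "0 \<le> x \<bullet> (T *v x)"
proof (cases "x = 0")
  case True then show ?thesis by simp
next
  case False
  have "trace (T ** hrefl x) \<le> trace T" by (rule opt[OF hrefl_orth[OF False]])
  then have "0 \<le> (2 / (x \<bullet> x)) * (x \<bullet> (T *v x))" unfolding trace_hrefl by simp
  moreover have "x \<bullet> x > 0" using False by simp
  ultimately show ?thesis by (simp add: zero_le_divide_iff zero_le_mult_iff)
qed

lemma nu_identity:
  fixes nu P Q a :: real
  assumes "nu \<noteq> 0"
  shows "nu * (- 2 / nu * P - 2 * a + 4 / nu * Q) = - 2 * P - 2 * a * nu + 4 * Q"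
  using assms by (simp add: field_simps)

lemma trace_cond_sym_vec:
  fixes T :: "real^'r^'r"
  assumes opt: "\<And>Q. orthogonal_matrix Q \<Longrightarrow> trace (T ** Q) \<le> trace T"
    and w: "w \<bullet> w = 1" and y: "y \<bullet> y = 1" and wy: "w \<bullet> y = 0"
  shows "w \<bullet> (T *v y) = y \<bullet> (T *v w)"
proof -
  let ?a = "w \<bullet> (T *v w)" and ?b = "w \<bullet> (T *v y)" and ?c = "y \<bullet> (T *v w)" and ?d = "y \<bullet> (T *v y)"
  have yw: "y \<bullet> w = 0" using wy by (simp add: inner_commute)
  have "?b - ?c = 0"
  proof (rule tp_lin_zero[of "2 * (?b - ?c)" "- 2 * (?a + ?d)", THEN mult_eq_0_iff[THEN iffD1], THEN disjE])
    fix t :: real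
    define z where "z = w + t *\<^sub>R y"
    have zz: "z \<bullet> z = 1 + t^2" unfolding z_def using w y wy yw
      by (simp add: inner_add_left inner_add_right power2_eq_square)
    have zw: "z \<bullet> w = 1" unfolding z_def using w yw by (simp add: inner_add_left)
    have "z \<bullet> z > 0" using zz by (simp add: add_pos_nonneg)
    then have z0: "z \<noteq> 0" by auto
    have o: "orthogonal_matrix (hrefl z ** hrefl w)"
    proof (rule orthogonal_matrix_mul[OF hrefl_orth[OF z0] hrefl_orth])
      show "w \<noteq> 0" using w by auto
    qed
    have "trace (T ** (hrefl z ** hrefl w)) \<le> trace T" by (rule opt[OF o])
    then have "- 2 / (z \<bullet> z) * (z \<bullet> (T *v z)) - 2 * ?a + 4 / (z \<bullet> z) * (z \<bullet> w) * (w \<bullet> (T *v z)) \<le> 0"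
      unfolding hrefl_prod[OF w] trace_mul_add trace_mul_diff trace_mul_scale trace_mul_outer trace_mul_id
      by simp
    moreover have "z \<bullet> (T *v z) = ?a + t * (?b + ?c) + t^2 * ?d"
      unfolding z_def by (simp add: matrix_vector_right_distrib matrix_vector_mult_scaleR inner_add_left
          inner_add_right algebra_simps power2_eq_square)
    moreover have "w \<bullet> (T *v z) = ?a + t * ?b"
      unfolding z_def by (simp add: matrix_vector_right_distrib matrix_vector_mult_scaleR inner_add_right)
    ultimately have "- 2 / (1 + t^2) * (?a + t * (?b + ?c) + t^2 * ?d) - 2 * ?a + 4 / (1 + t^2) * (?a + t * ?b) \<le> 0"
      using zz zw by simp
    then have "(1 + t^2) * (- 2 / (1 + t^2) * (?a + t * (?b + ?c) + t^2 * ?d) - 2 * ?a + 4 / (1 + t^2) * (?a + t * ?b)) \<le> 0"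
      by (simp add: mult_nonneg_nonpos add_pos_nonneg)
    moreover have "(1 + t^2) * (- 2 / (1 + t^2) * (?a + t * (?b + ?c) + t^2 * ?d) - 2 * ?a + 4 / (1 + t^2) * (?a + t * ?b))
        = t * (2 * (?b - ?c)) + t^2 * (- 2 * (?a + ?d))"
    proof -
      have "1 + t^2 > 0" by (simp add: add_pos_nonneg)
      then have "1 + t^2 \<noteq> 0" by simp
      then have "(1 + t^2) * (- 2 / (1 + t^2) * (?a + t * (?b + ?c) + t^2 * ?d) - 2 * ?a + 4 / (1 + t^2) * (?a + t * ?b))
          = - 2 * (?a + t * (?b + ?c) + t^2 * ?d) - 2 * ?a * (1 + t^2) + 4 * (?a + t * ?b)"
        by (rule nu_identity)
      also have "\<dots> = t * (2 * (?b - ?c)) + t^2 * (- 2 * (?a + ?d))"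
        by (simp add: algebra_simps)
      finally show ?thesis .
    qed
    ultimately show "t * (2 * (?b - ?c)) + t^2 * (- 2 * (?a + ?d)) \<le> 0" by simp
  qed simp_all
  then show ?thesis by simp
qed

lemma trace_cond_sym:
  fixes T :: "real^'r^'r"
  assumes opt: "\<And>Q. orthogonal_matrix Q \<Longrightarrow> trace (T ** Q) \<le> trace T"
  shows "transpose T = T"
proof -
  have "T $ i $ j = T $ j $ i" for i j
  proof (cases "i = j")
    case False
    have "axis i 1 \<bullet> (T *v axis j 1) = axis j 1 \<bullet> (T *v axis i (1::real))"
      by (rule trace_cond_sym_vec[OF opt]) (use False in \<open>simp_all add: inner_axis_axis\<close>)
    moreover have "axis a 1 \<bullet> (T *v axis b 1) = T $ a $ b" for a b
      by (simp add: inner_axis' matrix_vector_mult_basis column_def)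
    ultimately show ?thesis by simp
  qed simp
  then show ?thesis by (simp add: transpose_def vec_eq_iff)
qed

lemma trace_rot3: "trace ((A::real^'a^'b) ** (B::real^'c^'a) ** (C::real^'b^'c)) = trace (C ** A ** B)"
  by (simp only: trace_mul_sym[of "A ** B" C] matrix_mul_assoc)

lemma trace_rot4: "trace ((A::real^'a^'b) ** (B::real^'c^'a) ** (C::real^'d^'c) ** (D::real^'b^'d)) = trace (D ** A ** B ** C)"
  by (simp only: trace_mul_sym[of "A ** B ** C" D] matrix_mul_assoc)

lemma inner_transpose: "transpose (A::real^'a^'b) \<bullet> transpose B = A \<bullet> B"
proof -
  have "transpose A \<bullet> transpose B = (\<Sum>i\<in>UNIV. \<Sum>j\<in>UNIV. A$j$i * B$j$i)"
    by (simp add: inner_vec_def transpose_def inner_real_def)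
  also have "\<dots> = (\<Sum>j\<in>UNIV. \<Sum>i\<in>UNIV. A$j$i * B$j$i)" by (rule sum.swap)
  also have "\<dots> = A \<bullet> B" by (simp add: inner_vec_def inner_real_def)
  finally show ?thesis .
qed

lemma transpose_diff: "transpose ((A::real^'a^'b) - B) = transpose A - transpose B"
  by (simp add: transpose_def vec_eq_iff)

lemma transpose_add': "transpose ((A::real^'a^'b) + B) = transpose A + transpose B"
  by (simp add: transpose_def vec_eq_iff)

lemma matrix_diff_ldistrib: "(A::real^'a^'b) ** (B - C) = A ** B - A ** C"
  by (simp add: matrix_matrix_mult_def vec_eq_iff sum_subtractf right_diff_distrib)

lemma matrix_diff_rdistrib: "((A::real^'a^'b) - B) ** C = A ** C - B ** C"
  by (simp add: matrix_matrix_mult_def vec_eq_iff sum_subtractf left_diff_distrib)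

lemma matrix_add_rdistrib': "((A::real^'a^'b) + B) ** C = A ** C + B ** C"
  by (simp add: matrix_matrix_mult_def vec_eq_iff sum.distrib distrib_right)

lemma trace_diff_left: "trace (((A::real^'a^'b) - B) ** (C::real^'b^'a)) = trace (A ** C) - trace (B ** C)"
  by (simp add: matrix_diff_rdistrib trace_sub)

lemma trace_quad: "trace ((D::real^'r^'n) ** (S::real^'r^'r) ** transpose D) = (\<Sum>i\<in>UNIV. D$i \<bullet> (S *v D$i))"
  by (simp add: trace_def matrix_matrix_mult_def transpose_def inner_vec_def matrix_vector_mult_def
      sum_distrib_left sum_distrib_right mult_ac inner_real_def)
     (rule sum.cong[OF refl], subst sum.swap, simp add: mult_ac)

lemma rows_mul_t: "(D ** transpose (H::real^'r^'m)) $ i = H *v (D $ i)"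
  by (simp add: matrix_matrix_mult_def transpose_def matrix_vector_mult_def vec_eq_iff mult.commute)

lemma inner_rows: "(A::real^'a^'b) \<bullet> A = (\<Sum>i\<in>UNIV. A$i \<bullet> A$i)"
  by (simp add: inner_vec_def)

lemma tu_ineq:
  fixes U H :: "real^'r^'n"
  assumes Ssym: "transpose (transpose H ** U) = transpose H ** U"
    and Spsd: "\<And>x. 0 \<le> x \<bullet> ((transpose H ** U) *v x)"
    and lam: "\<And>x. (H *v x) \<bullet> (H *v x) \<ge> lam * (x \<bullet> x)" and lam0: "lam \<ge> 0"
  shows "(U ** transpose U - H ** transpose H) \<bullet> (U ** transpose U - H ** transpose H)
          \<ge> (4/5) * lam * ((U - H) \<bullet> (U - H))"
proof -
  define D where "D = U - H"
  define S where "S = transpose H ** U"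
  define X where "X = H ** transpose D"
  define Y where "Y = D ** transpose H"
  define Z where "Z = D ** transpose D"
  define K where "K = transpose H ** D"
  define G where "G = transpose D ** D"
  have UHD: "U = H + D" unfolding D_def by simp
  have E: "U ** transpose U - H ** transpose H = X + Y + Z"
    unfolding UHD X_def Y_def Z_def
    by (simp add: transpose_add' matrix_add_ldistrib matrix_add_rdistrib' algebra_simps)
  have tX: "transpose X = Y" unfolding X_def Y_def by (simp add: matrix_transpose_mul)
  have tY: "transpose Y = X" unfolding X_def Y_def by (simp add: matrix_transpose_mul)
  have tG: "transpose G = G" unfolding G_def by (simp add: matrix_transpose_mul)
  have KSB: "K = S - transpose H ** H" unfolding K_def S_def D_def by (rule matrix_diff_ldistrib)
  have tK: "transpose K = K"
    unfolding KSB transpose_diff using Ssym unfolding S_def by (simp add: matrix_transpose_mul)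
  define b where "b = Y \<bullet> Y"
  have XX: "X \<bullet> X = b" unfolding b_def using inner_transpose[of X X] tX by simp
  have bl: "b \<ge> lam * (D \<bullet> D)"
  proof -
    have "b = (\<Sum>i\<in>UNIV. (H *v D$i) \<bullet> (H *v D$i))" unfolding b_def Y_def inner_rows rows_mul_t ..
    also have "\<dots> \<ge> (\<Sum>i\<in>UNIV. lam * (D$i \<bullet> D$i))" by (rule sum_mono) (rule lam)
    finally show ?thesis by (simp add: inner_rows sum_distrib_left)
  qed
  have XY: "X \<bullet> Y = K \<bullet> K"
  proof -
    have "X \<bullet> Y = trace (Y ** Y)" unfolding inner_mat_trace tX ..
    also have "\<dots> = trace (D ** transpose H ** D ** transpose H)" unfolding Y_def by (simp only: matrix_mul_assoc)
    also have "\<dots> = trace (transpose H ** D ** transpose H ** D)" by (rule trace_rot4)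
    also have "\<dots> = trace (transpose K ** K)" unfolding tK unfolding K_def by (simp only: matrix_mul_assoc)
    also have "\<dots> = K \<bullet> K" unfolding inner_mat_trace ..
    finally show ?thesis .
  qed
  define x where "x = trace (K ** G)"
  have XZ: "X \<bullet> Z = x"
  proof -
    have "X \<bullet> Z = trace (Y ** Z)" unfolding inner_mat_trace tX ..
    also have "\<dots> = trace (D ** transpose H ** D ** transpose D)" unfolding Y_def Z_def by (simp only: matrix_mul_assoc)
    also have "\<dots> = trace (transpose D ** D ** transpose H ** D)" by (rule trace_rot4)
    also have "\<dots> = trace (G ** K)" unfolding G_def K_def by (simp only: matrix_mul_assoc)
    also have "\<dots> = x" unfolding x_def by (rule trace_mul_sym)
    finally show ?thesis .
  qed
  have YZ: "Y \<bullet> Z = x"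
  proof -
    have "Y \<bullet> Z = trace (X ** Z)" unfolding inner_mat_trace tY ..
    also have "\<dots> = trace (H ** transpose D ** D ** transpose D)" unfolding X_def Z_def by (simp only: matrix_mul_assoc)
    also have "\<dots> = trace (transpose D ** H ** transpose D ** D)" by (rule trace_rot4)
    also have "\<dots> = trace (transpose K ** G)" unfolding G_def K_def by (simp only: matrix_mul_assoc matrix_transpose_mul transpose_transpose)
    also have "\<dots> = x" unfolding x_def tK ..
    finally show ?thesis .
  qed
  have ZZ: "Z \<bullet> Z = G \<bullet> G"
  proof -
    have tZ: "transpose Z = Z" unfolding Z_def by (simp add: matrix_transpose_mul)
    have "Z \<bullet> Z = trace (Z ** Z)" unfolding inner_mat_trace tZ ..
    also have "\<dots> = trace (D ** transpose D ** D ** transpose D)" unfolding Z_def by (simp only: matrix_mul_assoc)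
    also have "\<dots> = trace (transpose D ** D ** transpose D ** D)" by (rule trace_rot4)
    also have "\<dots> = trace (transpose G ** G)" unfolding tG unfolding G_def by (simp only: matrix_mul_assoc)
    also have "\<dots> = G \<bullet> G" unfolding inner_mat_trace ..
    finally show ?thesis .
  qed
  have xb: "x \<ge> - b"
  proof -
    have "x = trace (S ** G) - trace (transpose H ** H ** G)" unfolding x_def KSB by (rule trace_diff_left)
    moreover have "trace (transpose H ** H ** G) = b"
    proof -
      have "trace (transpose H ** H ** G) = trace (transpose H ** H ** transpose D ** D)"
        unfolding G_def by (simp only: matrix_mul_assoc)
      also have "\<dots> = trace (D ** transpose H ** H ** transpose D)" by (rule trace_rot4)
      also have "\<dots> = trace (transpose X ** X)" unfolding tX unfolding Y_def X_def by (simp only: matrix_mul_assoc)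
      also have "\<dots> = b" unfolding inner_mat_trace[symmetric] by (rule XX)
      finally show ?thesis .
    qed
    moreover have "trace (S ** G) \<ge> 0"
    proof -
      have "trace (S ** G) = trace (S ** transpose D ** D)" unfolding G_def by (simp only: matrix_mul_assoc)
      also have "\<dots> = trace (D ** S ** transpose D)" by (rule trace_rot3)
      also have "\<dots> = (\<Sum>i\<in>UNIV. D$i \<bullet> (S *v D$i))" by (rule trace_quad)
      also have "\<dots> \<ge> 0" by (rule sum_nonneg) (use Spsd S_def in simp)
      finally show ?thesis .
    qed
    ultimately show ?thesis by linarith
  qed
  have xKG: "x \<ge> - (norm K * norm G)"
  proof -
    have "x = K \<bullet> G" unfolding x_def inner_mat_trace tK ..
    then have "\<bar>x\<bar> \<le> norm K * norm G" using Cauchy_Schwarz_ineq2[of K G] by simp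
    then show ?thesis by linarith
  qed
  have EE: "(X + Y + Z) \<bullet> (X + Y + Z) = X \<bullet> X + Y \<bullet> Y + Z \<bullet> Z + 2 * (X \<bullet> Y) + 2 * (X \<bullet> Z) + 2 * (Y \<bullet> Z)"
    by (simp add: inner_add_left inner_add_right inner_commute)
  have KK: "K \<bullet> K = (norm K)^2" and GG: "G \<bullet> G = (norm G)^2" by (simp_all add: power2_norm_eq_inner)
  have sq: "2 * (norm K)^2 - 2.8 * (norm K * norm G) + (norm G)^2 \<ge> 0"
  proof -
    have "2 * (norm K)^2 - 2.8 * (norm K * norm G) + (norm G)^2
        = 2 * (norm K - 0.7 * norm G)^2 + 0.02 * (norm G)^2"
      by (simp add: power2_eq_square algebra_simps)
    also have "\<dots> \<ge> 0" by simp
    finally show ?thesis .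
  qed
  have "(X + Y + Z) \<bullet> (X + Y + Z) = 2 * b + 2 * (norm K)^2 + 4 * x + (norm G)^2"
    unfolding EE XX XY XZ YZ ZZ KK GG b_def by simp
  also have "\<dots> \<ge> (4/5) * b" using xb xKG sq by linarith
  finally have "(X + Y + Z) \<bullet> (X + Y + Z) \<ge> (4/5) * b" .
  moreover have "(4/5) * b \<ge> (4/5) * lam * (D \<bullet> D)" using bl by simp
  ultimately show ?thesis unfolding E D_def by linarith
qed

lemma orth_compact: "compact {R::real^'r^'r. orthogonal_matrix R}"
proof -
  have e: "{R::real^'r^'r. orthogonal_matrix R} =
      {R. \<forall>i j. (\<Sum>k\<in>UNIV. R$k$i * R$k$j) = mat 1 $ i $ j}"
    unfolding orthogonal_matrix by (auto simp: vec_eq_iff matrix_matrix_mult_def transpose_def)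
  have cl: "closed {R::real^'r^'r. orthogonal_matrix R}"
    unfolding e by (intro closed_Collect_all closed_Collect_eq continuous_intros)
  have "norm R \<le> sqrt (real CARD('r))" if "orthogonal_matrix R" for R :: "real^'r^'r"
  proof -
    have "R \<bullet> R = trace (transpose R ** R)" by (rule inner_mat_trace)
    also have "\<dots> = real CARD('r)" using that unfolding orthogonal_matrix by (simp add: trace_I)
    finally show ?thesis by (simp add: norm_eq_sqrt_inner)
  qed
  then have "bounded {R::real^'r^'r. orthogonal_matrix R}" unfolding bounded_iff by blast
  then show ?thesis using cl by (simp add: compact_eq_bounded_closed)
qed

lemma procrustes:
  fixes U0 Us :: "real^'r^'n"
  obtains R where "orthogonal_matrix R"
    "transpose (transpose (Us ** R) ** U0) = transpose (Us ** R) ** U0"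
    "\<And>x. 0 \<le> x \<bullet> ((transpose (Us ** R) ** U0) *v x)"
    "\<And>Q. orthogonal_matrix Q \<Longrightarrow> norm (U0 - Us ** R) \<le> norm (U0 - Us ** Q)"
proof -
  let ?O = "{R::real^'r^'r. orthogonal_matrix R}"
  have ne: "?O \<noteq> {}" using orthogonal_matrix_id by blast
  have cont: "continuous_on ?O (\<lambda>R. norm (U0 - Us ** R))"
    unfolding matrix_matrix_mult_def by (intro continuous_intros)
  obtain R where RO: "R \<in> ?O" and Rmin: "\<And>Q. Q \<in> ?O \<Longrightarrow> norm (U0 - Us ** R) \<le> norm (U0 - Us ** Q)"
    using continuous_attains_inf[OF orth_compact ne cont] by blast
  define H where "H = Us ** R"
  define T where "T = transpose U0 ** H"
  have opt: "trace (T ** Q) \<le> trace T" if Q: "orthogonal_matrix Q" for Q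
  proof -
    have RQ: "R ** Q \<in> ?O" using RO Q by (simp add: orthogonal_matrix_mul)
    have "norm (U0 - H) \<le> norm (U0 - H ** Q)"
      using Rmin[OF RQ] unfolding H_def by (simp add: matrix_mul_assoc)
    then have "(U0 - H) \<bullet> (U0 - H) \<le> (U0 - H ** Q) \<bullet> (U0 - H ** Q)"
      by (simp add: norm_le)
    moreover have "(H ** Q) \<bullet> (H ** Q) = H \<bullet> H"
    proof -
      have QQ: "Q ** transpose Q = mat 1" using Q by (simp add: orthogonal_matrix_def)
      have "(H ** Q) \<bullet> (H ** Q) = trace (transpose Q ** transpose H ** H ** Q)"
        unfolding inner_mat_trace by (simp only: matrix_transpose_mul matrix_mul_assoc)
      also have "\<dots> = trace (Q ** transpose Q ** transpose H ** H)" by (rule trace_rot4)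
      also have "\<dots> = H \<bullet> H" unfolding QQ inner_mat_trace by simp
      finally show ?thesis .
    qed
    moreover have "U0 \<bullet> (H ** Q) = trace (T ** Q)"
      unfolding inner_mat_trace T_def by (simp only: matrix_mul_assoc)
    moreover have "U0 \<bullet> H = trace T" unfolding inner_mat_trace T_def ..
    ultimately show ?thesis
      by (simp add: inner_diff_left inner_diff_right inner_commute)
  qed
  have tT: "transpose T = T" by (rule trace_cond_sym[OF opt])
  have S: "transpose H ** U0 = T" using tT unfolding T_def by (simp add: matrix_transpose_mul)
  show ?thesis
  proof (rule that[OF _ _ _ Rmin])
    show "orthogonal_matrix R" using RO by simp
    show "transpose (transpose (Us ** R) ** U0) = transpose (Us ** R) ** U0"
      using S tT unfolding H_def by simp
    show "0 \<le> x \<bullet> ((transpose (Us ** R) ** U0) *v x)" for x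
      using S trace_cond_psd[OF opt, of x] unfolding H_def by simp
  qed simp
qed

lemma orth_norm:
  fixes R :: "real^'r^'r"
  assumes "orthogonal_matrix R"
  shows "(R *v x) \<bullet> (R *v x) = x \<bullet> x"
proof -
  have "(R *v x) \<bullet> (R *v x) = (transpose R *v (R *v x)) \<bullet> x" by (rule sym_inner)
  also have "\<dots> = x \<bullet> x" using assms
    by (simp only: matrix_vector_mul_assoc orthogonal_matrix) simp
  finally show ?thesis .
qed

lemma final_arith:
  fixes a q sr s1 c2 rr N :: real
  assumes F1: "(4/5) * q^2 * a^2 \<le> N" and F2: "N \<le> 4 * c2 * rr * s1^2" and F3: "sr \<le> q^2"
    and q: "q > 0" and sr: "sr > 0" and s1: "s1 \<ge> 0" and c2: "c2 \<ge> 0" and rr: "rr \<ge> 1" and a: "a \<ge> 0"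
  shows "a \<le> 4 * sqrt 2 * rr * (s1 / sr) * sqrt c2 * q"
proof -
  have q2: "q^2 > 0" using q by simp
  have a2: "a^2 \<le> 5 * c2 * rr * s1^2 / q^2"
  proof -
    have "(4/5) * q^2 * a^2 \<le> 4 * c2 * rr * s1^2" using F1 F2 by linarith
    then have "q^2 * a^2 \<le> 5 * c2 * rr * s1^2" by (simp add: mult_ac)
    then show ?thesis using q2 by (simp add: field_simps)
  qed
  define T where "T = 4 * sqrt 2 * rr * (s1 / sr) * sqrt c2 * q"
  have T0: "T \<ge> 0" unfolding T_def using rr sr s1 c2 q by simp
  have T2: "T^2 = 32 * rr^2 * s1^2 * c2 * q^2 / sr^2"
    unfolding T_def using c2 by (simp add: power_mult_distrib power_divide)
  have "5 * c2 * rr * s1^2 / q^2 \<le> 32 * rr^2 * s1^2 * c2 / q^2"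
  proof (rule divide_right_mono)
    have "5 * (c2 * rr * s1^2) \<le> 32 * rr * (c2 * rr * s1^2)"
      by (rule mult_right_mono) (use rr c2 s1 in auto)
    then show "5 * c2 * rr * s1^2 \<le> 32 * rr^2 * s1^2 * c2" by (simp add: power2_eq_square mult_ac)
  qed (use q2 in simp)
  also have "\<dots> = 32 * rr^2 * s1^2 * c2 * q^2 / (q^2)^2" using q2 by (simp add: power2_eq_square field_simps)
  also have "\<dots> \<le> 32 * rr^2 * s1^2 * c2 * q^2 / sr^2"
  proof (rule divide_left_mono)
    show "sr^2 \<le> (q^2)^2" using F3 sr by (intro power_mono) auto
  qed (use rr s1 c2 q sr in auto)
  finally have "a^2 \<le> T^2" using a2 T2 by simp
  then have "a \<le> T" using T0 by (rule power2_le_imp_le)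
  then show ?thesis unfolding T_def .
qed

theorem corollary5p3:
  fixes f :: "real^'n^'n \<Rightarrow> real"
    and grad :: "real^'n^'n \<Rightarrow> real^'n^'n"
    and M m :: real
    and i1 :: 'n
    and Xs X0 X0r :: "real^'n^'n"
    and U0 Us :: "real^'r^'n"
  assumes grad: "\<And>X. (f has_derivative (\<lambda>H. grad X \<bullet> H)) (at X)"
    and sym: "\<And>X. f (transpose X) = f X"
    and cvx: "convex_on psd_cone f"
    and smooth: "\<And>X Y. X \<in> psd_cone \<Longrightarrow> Y \<in> psd_cone \<Longrightarrow> norm (grad X - grad Y) \<le> M * norm (X - Y)"
    and strong: "\<And>X Y. X \<in> psd_cone \<Longrightarrow> Y \<in> psd_cone \<Longrightarrow>
                   f Y \<ge> f X + grad X \<bullet> (Y - X) + m / 2 * (norm (Y - X))\<^sup>2"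
    and mpos: "m > 0"
    and Xs_psd: "Xs \<in> psd_cone"
    and Xs_min: "\<And>Y. Y \<in> psd_cone \<Longrightarrow> f Xs \<le> f Y"
    and X0_def: "X0 = (1 / norm (grad 0 - grad (outer (axis i1 1) (axis i1 1)))) *\<^sub>R proj_psd (- grad 0)"
    and X0r: "trunc_eig X0 CARD('r) X0r"
    and U0: "U0 ** transpose U0 = X0r"
    and rank_Xs: "rank Xs = CARD('r)"
    and Us: "Us ** transpose Us = Xs"
  shows "Dist U0 Us \<le> 4 * sqrt 2 * real CARD('r) * tau Xs
            * sqrt ((M / m)\<^sup>2 - 2 / (M / m) + 1) * sing_val Us CARD('r)"
proof -
  let ?r = "CARD('r)" and ?n = "CARD('n)"
  define c2 where "c2 = (M / m)\<^sup>2 - 2 / (M / m) + 1"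
  have r1: "1 \<le> ?r" by (simp add: Suc_leI)
  have ib: "(X0 - Xs) \<bullet> (X0 - Xs) \<le> c2 * (Xs \<bullet> Xs)" "psd X0" "m \<le> M"
    using init_bound[OF smooth strong mpos Xs_psd Xs_min X0_def] unfolding c2_def by auto
  have c20: "c2 \<ge> 0"
  proof -
    have k1: "M / m \<ge> 1" using ib(3) mpos by simp
    then have "2 / (M / m) \<le> 2 / 1" by (intro divide_left_mono) auto
    then have "2 / (M / m) \<le> 2" by simp
    moreover have "(M / m)\<^sup>2 \<ge> 1" using k1 by (simp add: one_le_power)
    ultimately show ?thesis unfolding c2_def by linarith
  qed
  have psdXs: "psd Xs" using Xs_psd by (simp add: psd_cone_def)
  note sv = sv_facts[OF Us[symmetric] rank_Xs psdXs]
  have rn: "?r \<le> ?n" by (rule sv(1))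
  obtain w mu where wm: "orthon {1..?n} w"
    "\<And>k j. 1 \<le> k \<Longrightarrow> k \<le> j \<Longrightarrow> j \<le> ?n \<Longrightarrow> mu j \<le> mu k"
    "\<And>k. k \<in> {1..?n} \<Longrightarrow> Xs *v w k = mu k *\<^sub>R w k"
    "Xs = (\<Sum>k=1..?n. mu k *\<^sub>R outer (w k) (w k))"
    "\<And>k. k \<in> {1..?n} \<Longrightarrow> 0 \<le> mu k"
    "is_svd Xs mu"
    by (rule psd_spectral[OF psdXs]) blast
  have ker: "Xs *v w k = 0" if "?r < k" "k \<le> ?n" for k
  proof -
    have "mu k = 0" using svd_rank(3)[OF wm(6) rank_Xs r1] that by simp
    then show ?thesis using wm(3)[of k] that by simp
  qed
  have tb: "(X0 - X0r) \<bullet> (X0 - X0r) \<le> (X0 - Xs) \<bullet> (X0 - Xs)"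
    by (rule trunc_bound[OF ib(2) X0r wm(1) ker rn r1])
  define N where "N = (X0r - Xs) \<bullet> (X0r - Xs)"
  have NB: "N \<le> 4 * c2 * real ?r * (sing_val Xs 1)^2"
  proof -
    have "norm (X0r - Xs) \<le> norm (X0r - X0) + norm (X0 - Xs)"
      using norm_triangle_ineq[of "X0r - X0" "X0 - Xs"] by simp
    also have "norm (X0r - X0) \<le> norm (X0 - Xs)"
      using tb by (simp add: norm_le norm_minus_commute)
    finally have "norm (X0r - Xs) \<le> 2 * norm (X0 - Xs)" by simp
    then have "(norm (X0r - Xs))^2 \<le> (2 * norm (X0 - Xs))^2" by (rule power_mono) simp
    then have "N \<le> 4 * ((X0 - Xs) \<bullet> (X0 - Xs))" unfolding N_def by (simp add: power2_norm_eq_inner power_mult_distrib)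
    also have "\<dots> \<le> 4 * (c2 * (Xs \<bullet> Xs))" using ib(1) by simp
    also have "\<dots> \<le> 4 * (c2 * (real ?r * (sing_val Xs 1)^2))"
      using sv(4) c20 by (intro mult_left_mono) auto
    finally show ?thesis by (simp add: mult_ac)
  qed
  obtain R where R: "orthogonal_matrix R"
    "transpose (transpose (Us ** R) ** U0) = transpose (Us ** R) ** U0"
    "\<And>x. 0 \<le> x \<bullet> ((transpose (Us ** R) ** U0) *v x)"
    by (rule procrustes[of Us U0]) blast
  define H where "H = Us ** R"
  define q where "q = sing_val Us ?r"
  have lamH: "(H *v x) \<bullet> (H *v x) \<ge> q^2 * (x \<bullet> x)" for x
  proof -
    have "(H *v x) \<bullet> (H *v x) = (Us *v (R *v x)) \<bullet> (Us *v (R *v x))"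
      unfolding H_def by (simp add: matrix_vector_mul_assoc)
    also have "\<dots> \<ge> q^2 * ((R *v x) \<bullet> (R *v x))" unfolding q_def by (rule sv(6))
    finally show ?thesis using orth_norm[OF R(1)] by simp
  qed
  have tu: "(U0 ** transpose U0 - H ** transpose H) \<bullet> (U0 ** transpose U0 - H ** transpose H)
          \<ge> (4/5) * q^2 * ((U0 - H) \<bullet> (U0 - H))"
    by (rule tu_ineq) (use R(2,3) lamH in \<open>simp_all add: H_def\<close>)
  have HH: "H ** transpose H = Xs"
  proof -
    have "R ** transpose R = mat 1" using R(1) by (simp add: orthogonal_matrix_def)
    have "H ** transpose H = Us ** (R ** transpose R) ** transpose Us"
      unfolding H_def by (simp only: matrix_transpose_mul matrix_mul_assoc)
    also have "\<dots> = Xs" using \<open>R ** transpose R = mat 1\<close> Us by simp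
    finally show ?thesis .
  qed
  have F1: "(4/5) * q^2 * (norm (U0 - H))^2 \<le> N"
    using tu unfolding U0 HH N_def by (simp add: power2_norm_eq_inner)
  have Dle: "Dist U0 Us \<le> norm (U0 - H)"
    unfolding Dist_def H_def
  proof (rule cInf_lower)
    show "norm (U0 - Us ** R) \<in> (\<lambda>R. norm (U0 - Us ** R)) ` {R. orthogonal_matrix R}" using R(1) by blast
    show "bdd_below ((\<lambda>R. norm (U0 - Us ** R)) ` {R. orthogonal_matrix R})"
      by (rule bdd_belowI[of _ 0]) auto
  qed
  have tauX: "tau Xs = sing_val Xs 1 / sing_val Xs ?r" unfolding tau_def rank_Xs ..
  have fa: "norm (U0 - H) \<le> 4 * sqrt 2 * real ?r * (sing_val Xs 1 / sing_val Xs ?r) * sqrt c2 * q"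
    by (rule final_arith[OF F1 NB sv(7)[folded q_def]]) (use sv(2,3,5) c20 r1 in \<open>simp_all add: q_def\<close>)
  show ?thesis using Dle fa unfolding tauX c2_def q_def by simp
qed

end
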